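(* Let $d\in\mathbb{N}^+$, $a<b$, let $f\in C([a,b]^d)$, and let $N=36d(2d+1)$ and $L=11$. Then for every $\varepsilon>0$ there exists $\phi\in\mathscr{H}_d(N,L)$ such that $|\phi(\boldsymbol{x})-f(\boldsymbol{x})|<\varepsilon$ for all $\boldsymbol{x}\in[a,b]^d$.
   Context: Let $\sigma_1:\mathbb{R}\to\mathbb{R}$ be the continuous triangular-wave function of period $2$: $\sigma_1(x)=|x|$ for $x\in[-1,1]$ and $\sigma_1(x+2)=\sigma_1(x)$ for all $x$ (equivalently $\sigma_1(x)=|x-2\lfloor (x+1)/2\rfloor|$). Let $\sigma_2(x)=x/(|x|+1)$ (softsign). The activation function (EUAF) is $\sigma(x)=\sigma_1(x)$ for $x\ge 0$ and $\sigma(x)=\sigma_2(x)$ for $x<0$; it is applied to vectors entrywise. For $N,L\in\mathbb{N}^+$, $\mathscr{H}_d(N,L)$ is the set of all functions $\phi:\mathbb{R}^d\to\mathbb{R}$ of the form $\phi=\mathcal{L}_L\circ\sigma\circ\mathcal{L}_{L-1}\circ\cdots\circ\sigma\circ\mathcal{L}_1\circ\sigma\circ\mathcal{L}_0$, where $\mathcal{L}_0:\mathbb{R}^d\to\mathbb{R}^N$, $\mathcal{L}_i:\mathbb{R}^N\to\mathbb{R}^N$ for $1\le i\le L-1$, and $\mathcal{L}_L:\mathbb{R}^N\to\mathbb{R}$ are arbitrary affine maps (real weight matrices and bias vectors); i.e. functions computed by $\sigma$-activated feed-forward networks with $L$ hidden layers each having exactly $N$ neurons. *)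

theory Defs
  imports "HOL-Analysis.Analysis"
begin

definition sigma1 :: "real \<Rightarrow> real" where
  "sigma1 x = \<bar>x - 2 * of_int \<lfloor>(x + 1) / 2\<rfloor>\<bar>"

definition sigma2 :: "real \<Rightarrow> real" where
  "sigma2 x = x / (\<bar>x\<bar> + 1)"

definition euaf :: "real \<Rightarrow> real" where
  "euaf x = (if x \<ge> 0 then sigma1 x else sigma2 x)"

text \<open>W0, b0: first affine map R^d -> R^N (input index type 'n);
  W i, bb i: affine map of hidden layer i (i \<ge> 1) R^N -> R^N.
  hidden W0 b0 W bb N x k = output vector (after activation) of hidden layer k+1.\<close>
fun hidden :: "(nat \<Rightarrow> 'n::finite \<Rightarrow> real) \<Rightarrow> (nat \<Rightarrow> real)
      \<Rightarrow> (nat \<Rightarrow> nat \<Rightarrow> nat \<Rightarrow> real) \<Rightarrow> (nat \<Rightarrow> nat \<Rightarrow> real)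
      \<Rightarrow> nat \<Rightarrow> real^'n \<Rightarrow> nat \<Rightarrow> (nat \<Rightarrow> real)" where
  "hidden W0 b0 W bb N x 0 = (\<lambda>j. euaf ((\<Sum>i\<in>UNIV. W0 j i * x $ i) + b0 j))"
| "hidden W0 b0 W bb N x (Suc k) =
     (\<lambda>j. euaf ((\<Sum>i<N. W (Suc k) j i * hidden W0 b0 W bb N x k i) + bb (Suc k) j))"

text \<open>H_d(N,L): functions computed by EUAF networks with L hidden layers of width N.\<close>
definition H_net :: "nat \<Rightarrow> nat \<Rightarrow> (real^'n::finite \<Rightarrow> real) set" where
  "H_net N L = {\<phi>. \<exists>W0 b0 W bb (wL :: nat \<Rightarrow> real) (cL :: real).
      \<phi> = (\<lambda>x. (\<Sum>i<N. wL i * hidden W0 b0 W bb N x (L - 1) i) + cL)}"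

end

theory Submission
  imports Defs "HOL-Computational_Algebra.Polynomial"
begin

lemma sigma1_alt: "sigma1 x = \<bar>x - 2 * of_int \<lfloor>(x + 1) / 2\<rfloor>\<bar>"
  by (simp add: sigma1_def)

lemma sigma1_t_bounds:
  "-1 \<le> (x::real) - 2 * of_int \<lfloor>(x + 1) / 2\<rfloor>" "x - 2 * of_int \<lfloor>(x + 1) / 2\<rfloor> < 1"
proof -
  have a: "of_int \<lfloor>(x + 1) / 2\<rfloor> \<le> (x+1)/2" "(x+1)/2 < of_int \<lfloor>(x + 1) / 2\<rfloor> + 1"
    by linarith+
  from a show "-1 \<le> x - 2 * of_int \<lfloor>(x + 1) / 2\<rfloor>" by (simp add: field_simps)
  from a show "x - 2 * of_int \<lfloor>(x + 1) / 2\<rfloor> < 1" by (simp add: field_simps)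
qed

lemma sigma1_periodic: "sigma1 (x + 2 * of_int k) = sigma1 x"
proof -
  have "\<lfloor>(x + 2 * of_int k + 1) / 2\<rfloor> = \<lfloor>(x + 1) / 2\<rfloor> + k"
  proof -
    have "(x + 2 * of_int k + 1) / 2 = (x + 1) / 2 + of_int k" by (simp add: field_simps)
    then show ?thesis by (metis floor_add_int)
  qed
  then show ?thesis by (simp add: sigma1_def algebra_simps)
qed

lemma sigma1_abs: "\<bar>x\<bar> \<le> 1 \<Longrightarrow> sigma1 x = \<bar>x\<bar>"
proof (cases "x = 1")
  case True then show ?thesis by (simp add: sigma1_def)
next
  case False
  assume "\<bar>x\<bar> \<le> 1"
  then have "\<lfloor>(x + 1) / 2\<rfloor> = 0" using False by (subst floor_eq_iff) auto
  then show ?thesis by (simp add: sigma1_def)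
qed

lemma sigma1_le: "sigma1 x \<le> \<bar>x - 2 * of_int k\<bar>"
proof -
  define m where "m = \<lfloor>(x + 1) / 2\<rfloor>"
  have b: "-1 \<le> x - 2 * of_int m" "x - 2 * of_int m < 1" using sigma1_t_bounds m_def by auto
  show ?thesis
  proof (cases "k = m")
    case True then show ?thesis by (simp add: sigma1_def m_def)
  next
    case False
    then have "k \<ge> m + 1 \<or> k \<le> m - 1" by auto
    then have "of_int k \<ge> (of_int m::real) + 1 \<or> of_int k \<le> (of_int m::real) - 1"
      by (metis of_int_1 of_int_add of_int_diff of_int_le_iff)
    then show ?thesis using b by (auto simp: sigma1_def m_def[symmetric])
  qed
qed

lemma sigma1_nonneg: "0 \<le> sigma1 x" by (simp add: sigma1_def)

lemma sigma1_le1: "sigma1 x \<le> 1"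
  using sigma1_t_bounds[of x] by (simp add: sigma1_def)

lemma sigma1_lip: "\<bar>sigma1 x - sigma1 y\<bar> \<le> \<bar>x - y\<bar>"
proof -
  have "sigma1 x \<le> sigma1 y + \<bar>x - y\<bar>" for x y
  proof -
    define m where "m = \<lfloor>(y + 1) / 2\<rfloor>"
    have "sigma1 x \<le> \<bar>x - 2 * of_int m\<bar>" by (rule sigma1_le)
    also have "\<dots> \<le> \<bar>x - y\<bar> + \<bar>y - 2 * of_int m\<bar>" by linarith
    also have "\<bar>y - 2 * of_int m\<bar> = sigma1 y" by (simp add: sigma1_def m_def)
    finally show ?thesis by linarith
  qed
  from this[of x y] this[of y x] show ?thesis by linarith
qed

lemma euaf_pos: "0 \<le> x \<Longrightarrow> euaf x = sigma1 x" by (simp add: euaf_def)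
lemma euaf_neg: "x < 0 \<Longrightarrow> euaf x = x / (1 - x)" by (simp add: euaf_def sigma2_def)
lemma euaf_id: "0 \<le> x \<Longrightarrow> x \<le> 1 \<Longrightarrow> euaf x = x"
  by (simp add: euaf_pos sigma1_abs)
lemma euaf_abs: "\<bar>z\<bar> \<le> 1 \<Longrightarrow> euaf (z + 2) = \<bar>z\<bar>"
proof -
  assume h: "\<bar>z\<bar> \<le> 1"
  have "sigma1 (z + 2 * real_of_int 1) = sigma1 z" by (rule sigma1_periodic)
  then have "sigma1 (z + 2) = sigma1 z" by simp
  then show ?thesis using h by (simp add: euaf_pos sigma1_abs)
qed
lemma euaf_zero: "euaf 0 = 0" by (simp add: euaf_def sigma1_def)

lemma relu_pair: "\<bar>z\<bar> \<le> 1 \<Longrightarrow> (2 * euaf ((z + 1) / 2) - 1 + euaf (z + 2)) / 2 = max 0 z"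
  by (simp add: euaf_abs euaf_id abs_le_iff) (auto simp: max_def abs_if field_simps)

lemma euaf_recip: "1 \<le> Z \<Longrightarrow> euaf (1 - Z) + 1 = 1 / Z"
proof (cases "Z = 1")
  case True then show ?thesis by (simp add: euaf_zero)
next
  case False
  assume "1 \<le> Z"
  then have "1 - Z < 0" using False by auto
  then show ?thesis using \<open>1 \<le> Z\<close> by (simp add: euaf_neg field_simps)
qed

definition Sq :: "real \<Rightarrow> real \<Rightarrow> real" where
  "Sq h z = 4 * (euaf (-1 + h * z) + euaf (-1 - h * z) + 1) / h^2"

lemma aux_div: "0 < (h::real) \<Longrightarrow> B > 0 \<Longrightarrow> 4 * (h^2 * z^2 / B) / h^2 = 4 * z^2 / B"
  by (simp add: field_simps)

lemma Sq_eq: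
  assumes "0 < h" "h * \<bar>z\<bar> < 1"
  shows "Sq h z = 4 * z^2 / (4 - h^2 * z^2)"
proof -
  have hz: "\<bar>h * z\<bar> < 1" using assms by (simp add: abs_mult)
  have a: "-1 + h * z < 0" "-1 - h * z < 0" using hz by (auto simp: abs_if split: if_splits)
  have b: "(2 - h*z) > 0" "2 + h * z > 0" using hz by (auto simp: abs_if split: if_splits)
  have c: "4 - h^2 * z^2 = (2 - h*z) * (2 + h*z)" by (simp add: algebra_simps power2_eq_square)
  have "euaf (-1 + h * z) + euaf (-1 - h * z) + 1 = (h*z-1)/(2-h*z) + (-1-h*z)/(2+h*z) + 1"
    using a by (simp add: euaf_neg)
  also have "\<dots> = h^2 * z^2 / ((2 - h*z) * (2 + h*z))"
  proof -
    have p: "(2 - h*z) * (2 + h*z) > 0" using b by simp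
    have e: "4 - h * (h * (z * z)) \<noteq> 0" using p by (simp add: algebra_simps)
    show ?thesis using b e by (simp add: field_simps) (simp add: algebra_simps power2_eq_square)
  qed
  finally have "euaf (-1 + h * z) + euaf (-1 - h * z) + 1 = h^2 * z^2 / (4 - h^2*z^2)" unfolding c .
  moreover have d: "4 - h^2*z^2 > 0" using b c by simp
  ultimately have "Sq h z = 4 * (h^2 * z^2 / (4 - h^2*z^2)) / h^2" by (simp add: Sq_def)
  also have "\<dots> = 4 * z^2 / (4 - h^2 * z^2)" using assms(1) d by (rule aux_div)
  finally show ?thesis .
qed


lemma Sq_err:
  assumes "0 < h" "h \<le> 1/6" "\<bar>z\<bar> \<le> 3"
  shows "\<bar>Sq h z - z^2\<bar> \<le> 27 * h^2"
proof -
  have hz: "h * \<bar>z\<bar> \<le> 1/2"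
  proof -
    have "h * \<bar>z\<bar> \<le> (1/6) * 3" using assms by (intro mult_mono) auto
    then show ?thesis by simp
  qed
  define q where "q = h^2 * z^2"
  have q: "0 \<le> q" "q \<le> 1/4" unfolding q_def
  proof -
    have "h^2 * z^2 = (h * \<bar>z\<bar>)^2" by (simp add: power_mult_distrib)
    also have "\<dots> \<le> (1/2)^2" using hz assms(1) by (intro power_mono) auto
    finally show "h^2 * z^2 \<le> 1/4" by (simp add: power2_eq_square)
  qed simp
  have "Sq h z = 4 * z^2 / (4 - q)" unfolding q_def using assms hz by (intro Sq_eq) auto
  then have e1: "Sq h z - z^2 = z^2 * q / (4 - q)" using q by (simp add: field_simps)
  have e2: "0 \<le> z^2 * q / (4 - q)" using q by simp
  have e3: "z^2 * q / (4 - q) \<le> z^2 * q / 3" using q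
    by (intro divide_left_mono) auto
  have e4: "z^2 * q = z^2 * z^2 * h^2" by (simp add: q_def)
  have e5: "z^2 * z^2 \<le> 81"
  proof -
    have "\<bar>z\<bar> * \<bar>z\<bar> \<le> 3 * 3" using assms(3) by (intro mult_mono) auto
    then have "z^2 \<le> 9" by (simp add: power2_eq_square)
    then have "z^2 * z^2 \<le> 9 * 9" by (intro mult_mono) auto
    then show ?thesis by simp
  qed
  have e6: "z^2 * z^2 * h^2 / 3 \<le> 81 * h^2 / 3"
    using e5 by (intro divide_right_mono mult_right_mono) auto
  have "\<bar>Sq h z - z^2\<bar> = z^2 * q / (4 - q)" using e1 e2 by (simp only: abs_of_nonneg)
  also have "\<dots> \<le> z^2 * q / 3" by (rule e3)
  also have "\<dots> \<le> 81 * h^2 / 3" using e4 e6 by simp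
  finally show ?thesis by simp
qed

definition Pr :: "real \<Rightarrow> real \<Rightarrow> real \<Rightarrow> real" where
  "Pr h x y = (Sq h (x + y) - Sq h (x - y)) / 4"

lemma Pr_err:
  assumes "0 < h" "h \<le> 1/6" "\<bar>x + y\<bar> \<le> 3" "\<bar>x - y\<bar> \<le> 3"
  shows "\<bar>Pr h x y - x * y\<bar> \<le> 14 * h^2"
proof -
  define A where "A = Sq h (x+y) - (x+y)^2"
  define B where "B = Sq h (x-y) - (x-y)^2"
  have "x * y = ((x+y)^2 - (x-y)^2) / 4" by (simp add: power2_eq_square algebra_simps)
  then have "Pr h x y - x * y = ((Sq h (x+y) - (x+y)^2) - (Sq h (x-y) - (x-y)^2)) / 4"
    by (simp add: Pr_def diff_divide_distrib)
  moreover have "\<bar>Sq h (x+y) - (x+y)^2\<bar> \<le> 27 * h^2" using assms by (intro Sq_err) auto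
  moreover have "\<bar>Sq h (x-y) - (x-y)^2\<bar> \<le> 27 * h^2" using assms by (intro Sq_err) auto
  ultimately have e: "Pr h x y - x * y = (A - B) / 4" "\<bar>A\<bar> \<le> 27 * h^2" "\<bar>B\<bar> \<le> 27 * h^2"
    unfolding A_def B_def by auto
  have "\<bar>A - B\<bar> \<le> \<bar>A\<bar> + \<bar>B\<bar>" by (rule abs_triangle_ineq4)
  then have "\<bar>A - B\<bar> / 4 \<le> 14 * h^2" using e(2,3) by simp
  then show ?thesis using e(1) by simp
qed

lemma stair:
  fixes \<tau> C :: real
  assumes C: "C \<ge> 1" and v: "sigma1 \<tau> \<le> C / (C + 1)"
  shows "\<tau> + sigma1 \<tau> - 2 * max 0 (sigma1 \<tau> - C * max 0 (1/2 - sigma1 (\<tau> + 1/2)))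
         = 2 * of_int \<lfloor>(\<tau> + 1) / 2\<rfloor>"
proof -
  define m where "m = \<lfloor>(\<tau> + 1) / 2\<rfloor>"
  define t where "t = \<tau> - 2 * of_int m"
  have tb: "-1 \<le> t" "t < 1" unfolding t_def m_def using sigma1_t_bounds by auto
  have sv: "sigma1 \<tau> = \<bar>t\<bar>" unfolding t_def m_def sigma1_def by simp
  have "sigma1 (\<tau> + 1/2) = sigma1 ((t + 1/2) + 2 * of_int m)" unfolding t_def by simp
  then have sw0: "sigma1 (\<tau> + 1/2) = sigma1 (t + 1/2)" by (simp only: sigma1_periodic)
  have sw: "sigma1 (\<tau> + 1/2) = (if t \<le> 1/2 then \<bar>t + 1/2\<bar> else 3/2 - t)"
  proof (cases "t \<le> 1/2")
    case True then show ?thesis using sw0 tb by (simp add: sigma1_abs)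
  next
    case False
    have "t + 1/2 = (t - 3/2) + 2 * of_int 1" by simp
    then have "sigma1 (t + 1/2) = sigma1 ((t - 3/2) + 2 * of_int 1)" by (rule arg_cong)
    also have "\<dots> = sigma1 (t - 3/2)" by (rule sigma1_periodic)
    also have "\<dots> = 3/2 - t" using False tb by (subst sigma1_abs) auto
    finally show ?thesis using False sw0 by (simp add: add.commute)
  qed
  have key: "t + \<bar>t\<bar> - 2 * max 0 (\<bar>t\<bar> - C * max 0 (1/2 - sigma1 (\<tau> + 1/2))) = 0"
  proof (cases "t \<ge> 0")
    case True
    then have "max 0 (1/2 - sigma1 (\<tau> + 1/2)) = 0" using sw tb by auto
    then show ?thesis using True by simp
  next
    case False
    show ?thesis
    proof (cases "t \<ge> -1/2")
      case True
      then have "max 0 (1/2 - sigma1 (\<tau> + 1/2)) = -t" using sw False by auto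
      moreover have "C * (-t) \<ge> -t" using C False by (simp add: mult_le_cancel_right1)
      ultimately show ?thesis using False by simp
    next
      case False2: False
      then have "max 0 (1/2 - sigma1 (\<tau> + 1/2)) = 1 + t" using sw False tb by auto
      moreover have "-t \<le> C / (C+1)" using v sv False by simp
      then have "-t * (C+1) \<le> C" using C by (simp add: field_simps)
      then have "-t - C * (1 + t) \<le> 0" by (simp add: algebra_simps)
      ultimately show ?thesis using False by simp
    qed
  qed
  show ?thesis using key sv unfolding t_def m_def by simp
qed


definition aff :: "('a \<Rightarrow> real) set \<Rightarrow> ('a \<Rightarrow> real) set" where
  "aff S = {h. \<exists>c e. \<forall>x. h x = (\<Sum>g\<in>S. c g * g x) + e}"

lemma aff_const: "(\<lambda>x. e) \<in> aff S"
  unfolding aff_def by (rule CollectI, rule exI[of _ "\<lambda>_. 0"], rule exI[of _ e]) simp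

lemma aff_mem: "finite S \<Longrightarrow> g \<in> S \<Longrightarrow> g \<in> aff S"
proof -
  assume S: "finite S" "g \<in> S"
  have "(\<Sum>g'\<in>S. (if g' = g then 1 else 0) * g' x) = (\<Sum>g'\<in>S. (if g' = g then g x else 0))" for x
    by (intro sum.cong) auto
  also have "\<dots> x = g x" for x using S by simp
  finally show ?thesis unfolding aff_def
    by (intro CollectI exI[of _ "\<lambda>g'. if g' = g then 1 else 0"] exI[of _ 0]) simp
qed

lemma aff_add: "f \<in> aff S \<Longrightarrow> g \<in> aff S \<Longrightarrow> (\<lambda>x. f x + g x) \<in> aff S"
proof -
  assume "f \<in> aff S" "g \<in> aff S"
  then obtain c1 e1 c2 e2 where 1: "\<forall>x. f x = (\<Sum>g\<in>S. c1 g * g x) + e1"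
    and 2: "\<forall>x. g x = (\<Sum>g\<in>S. c2 g * g x) + e2" unfolding aff_def by blast
  show ?thesis unfolding aff_def
    by (rule CollectI, rule exI[of _ "\<lambda>g. c1 g + c2 g"], rule exI[of _ "e1 + e2"])
      (simp add: 1 2 distrib_right sum.distrib)
qed

lemma aff_scale: "f \<in> aff S \<Longrightarrow> (\<lambda>x. r * f x) \<in> aff S"
proof -
  assume "f \<in> aff S"
  then obtain c1 e1 where 1: "\<forall>x. f x = (\<Sum>g\<in>S. c1 g * g x) + e1"
    unfolding aff_def by blast
  show ?thesis unfolding aff_def
    by (rule CollectI, rule exI[of _ "\<lambda>g. r * c1 g"], rule exI[of _ "r * e1"])
      (simp add: 1 distrib_left sum_distrib_left mult.assoc)
qed

lemma aff_minus: "f \<in> aff S \<Longrightarrow> (\<lambda>x. - f x) \<in> aff S"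
  using aff_scale[of f S "-1"] by simp

lemma aff_diff: "f \<in> aff S \<Longrightarrow> g \<in> aff S \<Longrightarrow> (\<lambda>x. f x - g x) \<in> aff S"
  using aff_add[of f S "\<lambda>x. - g x"] aff_minus[of g S] by simp

lemma aff_scale_r: "f \<in> aff S \<Longrightarrow> (\<lambda>x. f x * r) \<in> aff S"
  using aff_scale[of f S r] by (simp add: mult.commute)

lemma aff_div: "f \<in> aff S \<Longrightarrow> (\<lambda>x. f x / r) \<in> aff S"
  using aff_scale[of f S "1/r"] by simp

lemma aff_sum: "finite I \<Longrightarrow> (\<And>i. i \<in> I \<Longrightarrow> F i \<in> aff S) \<Longrightarrow> (\<lambda>x. \<Sum>i\<in>I. F i x) \<in> aff S"
proof (induction I rule: finite_induct)
  case empty then show ?case using aff_const[of 0 S] by simp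
next
  case (insert i I)
  then show ?case using aff_add[of "F i" S "\<lambda>x. \<Sum>i\<in>I. F i x"] by simp
qed

lemma aff_mono: "finite T \<Longrightarrow> S \<subseteq> T \<Longrightarrow> f \<in> aff S \<Longrightarrow> f \<in> aff T"
proof -
  assume T: "finite T" "S \<subseteq> T" "f \<in> aff S"
  then obtain c1 e1 where 1: "\<forall>x. f x = (\<Sum>g\<in>S. c1 g * g x) + e1"
    unfolding aff_def by blast
  have "(\<Sum>g\<in>T. (if g \<in> S then c1 g else 0) * g x) = (\<Sum>g\<in>S. c1 g * g x)" for x
    using T by (intro sum.mono_neutral_cong_right) auto
  then show ?thesis unfolding aff_def
    by (intro CollectI exI[of _ "\<lambda>g. if g \<in> S then c1 g else 0"] exI[of _ e1]) (simp add: 1)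
qed

definition lay :: "('a \<Rightarrow> real) set \<Rightarrow> ('a \<Rightarrow> real) set \<Rightarrow> bool" where
  "lay S T \<longleftrightarrow> (\<forall>g\<in>T. \<exists>h\<in>aff S. g = (\<lambda>x. euaf (h x)))"

lemma realize:
  fixes Ls :: "nat \<Rightarrow> ((real^'n::finite) \<Rightarrow> real) set" and N L :: nat
  assumes fin: "\<And>k. k < L \<Longrightarrow> finite (Ls k) \<and> card (Ls k) \<le> N"
    and L: "L \<ge> 1"
    and first: "\<And>g. g \<in> Ls 0 \<Longrightarrow> \<exists>A b. g = (\<lambda>x. euaf ((\<Sum>i\<in>UNIV. A i * x$i) + b))"
    and step: "\<And>k. Suc k < L \<Longrightarrow> lay (Ls k) (Ls (Suc k))"
    and out: "\<phi> \<in> aff (Ls (L - 1))"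
  shows "\<phi> \<in> H_net N L"
proof -
  have "\<forall>k. \<exists>e. k < L \<longrightarrow> bij_betw e {..<card (Ls k)} (Ls k)"
    using fin ex_bij_betw_nat_finite by (metis atLeast0LessThan)
  then obtain en where en: "\<And>k. k < L \<Longrightarrow> bij_betw (en k) {..<card (Ls k)} (Ls k)"
    by metis
  have "\<forall>g. \<exists>A b. g \<in> Ls 0 \<longrightarrow> g = (\<lambda>x. euaf ((\<Sum>i\<in>UNIV. A i * x$i) + b))"
    using first by blast
  then obtain A b where Ab: "\<And>g. g \<in> Ls 0 \<Longrightarrow> g = (\<lambda>x. euaf ((\<Sum>i\<in>UNIV. A g i * x$i) + b g))"
    by metis
  have "\<forall>k g. \<exists>c e. Suc k < L \<and> g \<in> Ls (Suc k) \<longrightarrow>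
         (\<forall>x. g x = euaf ((\<Sum>g'\<in>Ls k. c g' * g' x) + e))"
  proof (intro allI impI)
    fix k g
    show "\<exists>c e. Suc k < L \<and> g \<in> Ls (Suc k) \<longrightarrow>
         (\<forall>x. g x = euaf ((\<Sum>g'\<in>Ls k. c g' * g' x) + e))"
    proof (cases "Suc k < L \<and> g \<in> Ls (Suc k)")
      case True
      then obtain h where h: "h \<in> aff (Ls k)" "g = (\<lambda>x. euaf (h x))"
        using step unfolding lay_def by blast
      then obtain c e where "\<forall>x. h x = (\<Sum>g\<in>Ls k. c g * g x) + e" unfolding aff_def by blast
      then show ?thesis using h by auto
    qed auto
  qed
  then obtain C E where CE: "\<And>k g x. Suc k < L \<Longrightarrow> g \<in> Ls (Suc k) \<Longrightarrow>
         g x = euaf ((\<Sum>g'\<in>Ls k. C k g g' * g' x) + E k g)"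
    by metis
  define W0 where "W0 j i = (if j < card (Ls 0) then A (en 0 j) i else 0)" for j i
  define b0 where "b0 j = (if j < card (Ls 0) then b (en 0 j) else 0)" for j
  define W where "W k' j i = (if 0 < k' \<and> j < card (Ls k') \<and> i < card (Ls (k' - 1))
      then C (k' - 1) (en k' j) (en (k' - 1) i) else 0)" for k' j i
  define bb where "bb k' j = (if 0 < k' \<and> j < card (Ls k') then E (k' - 1) (en k' j) else 0)" for k' j
  have hid: "hidden W0 b0 W bb N x k j = (if j < card (Ls k) then en k j x else 0)"
    if "k < L" for k j x
    using that
  proof (induction k arbitrary: j)
    case 0
    show ?case
    proof (cases "j < card (Ls 0)")
      case True
      have g: "en 0 j \<in> Ls 0" using en[OF 0] True bij_betwE by blast
      from fun_cong[OF Ab[OF g], of x] True show ?thesis by (simp add: W0_def b0_def)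
    next
      case False then show ?thesis by (simp add: W0_def b0_def euaf_zero)
    qed
  next
    case (Suc k)
    have kL: "k < L" using Suc by simp
    show ?case
    proof (cases "j < card (Ls (Suc k))")
      case True
      have g: "en (Suc k) j \<in> Ls (Suc k)" using en[OF Suc.prems] True bij_betwE by blast
      have "(\<Sum>i<N. W (Suc k) j i * hidden W0 b0 W bb N x k i)
          = (\<Sum>i<card (Ls k). C k (en (Suc k) j) (en k i) * en k i x)"
      proof -
        have "(\<Sum>i<N. W (Suc k) j i * hidden W0 b0 W bb N x k i)
            = (\<Sum>i<N. (if i < card (Ls k) then C k (en (Suc k) j) (en k i) * en k i x else 0))"
          using True by (intro sum.cong) (auto simp: W_def Suc.IH[OF kL])
        also have "\<dots> = (\<Sum>i<card (Ls k). C k (en (Suc k) j) (en k i) * en k i x)"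
          using fin[OF kL] by (intro sum.mono_neutral_cong_right) auto
        finally show ?thesis .
      qed
      also have "\<dots> = (\<Sum>g'\<in>Ls k. C k (en (Suc k) j) g' * g' x)"
        using sum.reindex_bij_betw[OF en[OF kL], of "\<lambda>g'. C k (en (Suc k) j) g' * g' x"] by simp
      finally have sm: "(\<Sum>i<N. W (Suc k) j i * hidden W0 b0 W bb N x k i) = (\<Sum>g'\<in>Ls k. C k (en (Suc k) j) g' * g' x)" .
      have bbj: "bb (Suc k) j = E k (en (Suc k) j)" using True by (simp add: bb_def)
      have "hidden W0 b0 W bb N x (Suc k) j = euaf ((\<Sum>i<N. W (Suc k) j i * hidden W0 b0 W bb N x k i) + bb (Suc k) j)"
        by simp
      also have "\<dots> = en (Suc k) j x" unfolding sm bbj using CE[OF Suc.prems g, of x] by simp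
      finally show ?thesis using True by simp
    next
      case False then show ?thesis by (simp add: W_def bb_def euaf_zero)
    qed
  qed
  obtain c e where ce: "\<forall>x. \<phi> x = (\<Sum>g\<in>Ls (L - 1). c g * g x) + e" using out unfolding aff_def by blast
  have L1: "L - 1 < L" using L by simp
  define wL where "wL i = (if i < card (Ls (L - 1)) then c (en (L - 1) i) else 0)" for i
  have "\<phi> = (\<lambda>x. (\<Sum>i<N. wL i * hidden W0 b0 W bb N x (L - 1) i) + e)"
  proof
    fix x
    have "(\<Sum>i<N. wL i * hidden W0 b0 W bb N x (L - 1) i)
        = (\<Sum>i<N. (if i < card (Ls (L-1)) then c (en (L - 1) i) * en (L-1) i x else 0))"
      by (intro sum.cong refl) (simp only: wL_def hid[OF L1], simp)
    also have "\<dots> = (\<Sum>i<card (Ls (L-1)). c (en (L - 1) i) * en (L-1) i x)"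
      using fin[OF L1] by (intro sum.mono_neutral_cong_right) auto
    also have "\<dots> = (\<Sum>g\<in>Ls (L - 1). c g * g x)"
      using sum.reindex_bij_betw[OF en[OF L1], of "\<lambda>g. c g * g x"] by simp
    finally show "\<phi> x = (\<Sum>i<N. wL i * hidden W0 b0 W bb N x (L - 1) i) + e" using ce by simp
  qed
  then show ?thesis unfolding H_net_def by blast
qed


definition Pl :: "nat \<Rightarrow> int list \<Rightarrow> real poly" where
  "Pl M xs = (\<Sum>n<M. smult (of_int (xs ! n)) (\<Prod>k\<in>{..<M} - {n}. [:of_nat k, 1:]))"

lemma poly_Pl: "poly (Pl M xs) c = (\<Sum>n<M. of_int (xs ! n) * (\<Prod>k\<in>{..<M} - {n}. (c + of_nat k)))"
  by (simp add: Pl_def poly_sum poly_prod add.commute)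

lemma Pl_nonzero:
  assumes "n0 < M" "xs ! n0 \<noteq> 0"
  shows "Pl M xs \<noteq> 0"
proof
  assume "Pl M xs = 0"
  then have "poly (Pl M xs) (- of_nat n0) = 0" by simp
  moreover have "poly (Pl M xs) (- of_nat n0) = of_int (xs ! n0) * (\<Prod>k\<in>{..<M} - {n0}. (- of_nat n0 + of_nat k))"
  proof -
    have "(\<Sum>n<M. of_int (xs ! n) * (\<Prod>k\<in>{..<M} - {n}. (- of_nat n0 + (of_nat k::real))))
        = (\<Sum>n\<in>{n0}. of_int (xs ! n) * (\<Prod>k\<in>{..<M} - {n}. (- of_nat n0 + (of_nat k::real))))"
    proof (rule sum.mono_neutral_right)
      show "\<forall>i\<in>{..<M} - {n0}. of_int (xs ! i) * (\<Prod>k\<in>{..<M} - {i}. (- of_nat n0 + (of_nat k::real))) = 0"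
      proof
        fix i assume i: "i \<in> {..<M} - {n0}"
        have "(\<Prod>k\<in>{..<M} - {i}. (- of_nat n0 + (of_nat k::real))) = 0"
          using i assms(1) by (intro prod_zero) auto
        then show "of_int (xs ! i) * (\<Prod>k\<in>{..<M} - {i}. (- of_nat n0 + (of_nat k::real))) = 0" by simp
      qed
    qed (use assms in auto)
    then show ?thesis by (simp add: poly_Pl)
  qed
  moreover have "(\<Prod>k\<in>{..<M} - {n0}. (- of_nat n0 + (of_nat k::real))) \<noteq> 0"
    by (subst prod_zero_iff) auto
  ultimately show False using assms(2) by simp
qed

lemma exists_c:
  fixes M :: nat and C0 :: real
  assumes "C0 \<ge> 0"
  shows "\<exists>c>C0. \<forall>q::nat\<Rightarrow>int. (\<exists>n<M. q n \<noteq> 0) \<longrightarrow> (\<Sum>n<M. of_int (q n) / (c + of_nat n)) \<noteq> 0"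
proof -
  define B where "B = (\<Union>xs\<in>{xs. Pl M xs \<noteq> 0}. {c. poly (Pl M xs) c = 0})"
  have "countable B" unfolding B_def
    by (intro countable_UN) (auto intro: countable_finite poly_roots_finite)
  moreover have "uncountable {C0<..<C0+1}" by (simp add: uncountable_open_interval)
  ultimately have "\<not> {C0<..<C0+1} \<subseteq> B" using countable_subset by blast
  then obtain c where c: "c \<in> {C0<..<C0+1}" "c \<notin> B" by blast
  show ?thesis
  proof (intro exI[of _ c] conjI allI impI)
    show "c > C0" using c by simp
    fix q :: "nat \<Rightarrow> int" assume "\<exists>n<M. q n \<noteq> 0"
    then obtain n0 where n0: "n0 < M" "q n0 \<noteq> 0" by blast
    define xs where "xs = map q [0..<M]"
    have xsn: "n < M \<Longrightarrow> xs ! n = q n" for n by (simp add: xs_def)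
    have "Pl M xs \<noteq> 0" using n0 xsn by (intro Pl_nonzero[of n0]) auto
    then have pc: "poly (Pl M xs) c \<noteq> 0" using c(2) unfolding B_def by blast
    have cpos: "c + of_nat k > 0" for k using c assms by simp
    have "(\<Sum>n<M. of_int (q n) / (c + of_nat n)) * (\<Prod>k<M. (c + of_nat k)) = poly (Pl M xs) c"
    proof -
      have "(\<Sum>n<M. of_int (q n) / (c + of_nat n)) * (\<Prod>k<M. (c + of_nat k))
          = (\<Sum>n<M. of_int (q n) / (c + of_nat n) * (\<Prod>k<M. (c + of_nat k)))"
        by (simp add: sum_distrib_right)
      also have "\<dots> = (\<Sum>n<M. of_int (xs ! n) * (\<Prod>k\<in>{..<M} - {n}. (c + of_nat k)))"
      proof (intro sum.cong refl)
        fix n assume n: "n \<in> {..<M}"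
        have "(\<Prod>k<M. (c + of_nat k)) = (c + of_nat n) * (\<Prod>k\<in>{..<M} - {n}. (c + of_nat k))"
          using n by (simp add: prod.remove)
        then show "of_int (q n) / (c + of_nat n) * (\<Prod>k<M. (c + of_nat k))
            = of_int (xs ! n) * (\<Prod>k\<in>{..<M} - {n}. (c + of_nat k))"
          using n cpos[of n] xsn[of n] by (simp add: field_simps)
      qed
      finally show ?thesis by (simp add: poly_Pl)
    qed
    then show "(\<Sum>n<M. of_int (q n) / (c + of_nat n)) \<noteq> 0" using pc by auto
  qed
qed

lemma indep_theta:
  fixes c :: real and M :: nat
  assumes c: "c > 0"
    and nz: "\<forall>q::nat\<Rightarrow>int. (\<exists>n<M. q n \<noteq> 0) \<longrightarrow> (\<Sum>n<M. of_int (q n) / (c + of_nat n)) \<noteq> 0"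
  shows "module.independent (\<lambda>r. (*) (real_of_int r)) ((\<lambda>n. 1 / (of_nat n + c)) ` {..<M})"
    and "inj_on (\<lambda>n. 1 / (of_nat n + c)) {..<M}"
proof -
  define \<theta> where "\<theta> = (\<lambda>n::nat. 1 / (of_nat n + c))"
  have inj: "inj_on \<theta> {..<M}" unfolding \<theta>_def inj_on_def using c by (auto simp: field_simps)
  then show "inj_on (\<lambda>n. 1 / (of_nat n + c)) {..<M}" unfolding \<theta>_def .
  interpret m: Modules.module "(\<lambda>r. (*) (real_of_int r))"
    by (simp add: Modules.module.intro distrib_left mult.commute)
  show "m.independent ((\<lambda>n. 1 / (of_nat n + c)) ` {..<M})"
    unfolding \<theta>_def[symmetric]
  proof
    assume "m.dependent (\<theta> ` {..<M})"
    then obtain t u where tu: "finite t" "t \<subseteq> \<theta> ` {..<M}" "(\<Sum>v\<in>t. of_int (u v) * v) = 0"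
      "\<exists>v\<in>t. u v \<noteq> 0" unfolding m.dependent_explicit by blast
    define q where "q n = (if \<theta> n \<in> t then u (\<theta> n) else 0)" for n
    define I where "I = {n\<in>{..<M}. \<theta> n \<in> t}"
    have tI: "t = \<theta> ` I" using tu(2) unfolding I_def by auto
    have injI: "inj_on \<theta> I" using inj unfolding I_def by (rule inj_on_subset) auto
    have "(\<Sum>n<M. of_int (q n) / (c + of_nat n)) = (\<Sum>n\<in>I. of_int (u (\<theta> n)) * \<theta> n)"
    proof -
      have "(\<Sum>n<M. of_int (q n) / (c + of_nat n)) = (\<Sum>n\<in>I. of_int (q n) / (c + of_nat n))"
        by (rule sum.mono_neutral_right) (auto simp: I_def q_def)
      also have "\<dots> = (\<Sum>n\<in>I. of_int (u (\<theta> n)) * \<theta> n)"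
        by (intro sum.cong refl) (auto simp: I_def q_def \<theta>_def add.commute)
      finally show ?thesis .
    qed
    also have "\<dots> = (\<Sum>v\<in>t. of_int (u v) * v)"
      unfolding tI using sum.reindex[OF injI, of "\<lambda>v. of_int (u v) * v"] by simp
    also have "\<dots> = 0" by (rule tu(3))
    finally have "(\<Sum>n<M. of_int (q n) / (c + of_nat n)) = 0" .
    moreover have "\<exists>n<M. q n \<noteq> 0"
    proof -
      obtain v where v: "v \<in> t" "u v \<noteq> 0" using tu(4) by blast
      then obtain n where "n < M" "v = \<theta> n" using tu(2) by auto
      then show ?thesis using v by (auto simp: q_def)
    qed
    ultimately show False using nz by blast
  qed
qed

lemma digits_bound:
  fixes P :: nat
  assumes "\<forall>j<k. a j < P"
  shows "(\<Sum>j<k. a j * P^j) < P^k"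
  using assms
proof (induction k)
  case 0 then show ?case by simp
next
  case (Suc k)
  have "(\<Sum>j<Suc k. a j * P^j) = (\<Sum>j<k. a j * P^j) + a k * P^k" by simp
  also have "\<dots> < P^k + a k * P^k" using Suc by simp
  also have "\<dots> \<le> P^k + (P - 1) * P^k" using Suc.prems by (intro add_left_mono mult_right_mono) auto
  also have "\<dots> = P^Suc k" using Suc.prems by (cases P) (auto simp: algebra_simps)
  finally show ?case .
qed

lemma digits_inj:
  fixes P :: nat
  assumes "\<forall>j<k. a j < P" "\<forall>j<k. b j < P"
    and "(\<Sum>j<k. a j * P^j) = (\<Sum>j<k. b j * P^j)"
  shows "\<forall>j<k. a j = b j"
  using assms
proof (induction k)
  case 0 then show ?case by simp
next
  case (Suc k)
  have ba: "(\<Sum>j<k. a j * P^j) < P^k" using Suc.prems(1) by (intro digits_bound) auto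
  have bb: "(\<Sum>j<k. b j * P^j) < P^k" using Suc.prems(2) by (intro digits_bound) auto
  have Ppos: "P^k > 0" using Suc.prems(1) by (cases P) auto
  have e: "(\<Sum>j<k. a j * P^j) + a k * P^k = (\<Sum>j<k. b j * P^j) + b k * P^k"
    using Suc.prems(3) by simp
  have "((\<Sum>j<k. a j * P^j) + a k * P^k) div P^k = a k"
    using ba Ppos by simp
  moreover have "((\<Sum>j<k. b j * P^j) + b k * P^k) div P^k = b k"
    using bb Ppos by simp
  ultimately have abk: "a k = b k" using e by simp
  then have "(\<Sum>j<k. a j * P^j) = (\<Sum>j<k. b j * P^j)" using e by simp
  then have "\<forall>j<k. a j = b j" by (intro Suc.IH) (use Suc.prems in auto)
  then show ?case using abk less_Suc_eq by auto
qed


locale geo =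
  fixes a b :: real and K :: nat and ei :: "nat \<Rightarrow> 'n::finite"
  assumes ab: "a < b" and Kd: "CARD('n) \<le> K" and K1: "1 \<le> K"
    and ei: "bij_betw ei {..<CARD('n)} UNIV"
begin


definition cube :: "(real^'n) set" where "cube = {x. \<forall>i. x $ i \<in> {a..b}}"
definition uu :: "'n \<Rightarrow> real^'n \<Rightarrow> real" where "uu i x = (x $ i - a) / (b - a)"
definition tau :: "nat \<Rightarrow> 'n \<Rightarrow> real^'n \<Rightarrow> real" where
  "tau s i x = 2 * real K * uu i x + 2 * real s / (real CARD('n) + 1)"
definition T0 :: real where "T0 = 2 * real K + 2"
definition dl :: real where "dl = 1 / (4 * (real CARD('n) + 1))"
definition Cc :: real where "Cc = 4 * (real CARD('n) + 1)"
definition PP :: nat where "PP = K + 2"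
definition mI :: "nat \<Rightarrow> 'n \<Rightarrow> real^'n \<Rightarrow> int" where
  "mI s i x = \<lfloor>(tau s i x + 1) / 2\<rfloor>"
definition code :: "nat \<Rightarrow> real^'n \<Rightarrow> nat" where
  "code s x = (\<Sum>j<CARD('n). nat (mI s (ei j) x) * PP ^ j) + s * PP ^ CARD('n)"

definition vv where "vv s i x = sigma1 (tau s i x)"
definition ww where "ww s i x = sigma1 (tau s i x + 1/2)"
definition Fp where "Fp s i x = tau s i x + vv s i x - 2 * max 0 (vv s i x - Cc * max 0 (1/2 - ww s i x))"
definition betap where "betap s i x = (1 / dl) * max 0 (vv s i x - 1 + 2 * dl)"
definition rhop where "rhop s x = max 0 (1 - (\<Sum>i\<in>UNIV. betap s i x))"

lemma dpos: "real CARD('n) \<ge> 1" by simp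

lemma dl_facts: "0 < dl" "dl \<le> 1/8" "Cc = 1 / dl" "1 - dl \<le> Cc / (Cc + 1)" "Cc \<ge> 1"
proof -
  show "0 < dl" unfolding dl_def by simp
  show "dl \<le> 1/8" unfolding dl_def using dpos by (simp add: field_simps)
  show "Cc = 1 / dl" unfolding dl_def Cc_def by simp
  show "Cc \<ge> 1" unfolding Cc_def by simp
  have "(1 - dl) * (1 + dl) \<le> 1" by (simp add: algebra_simps)
  moreover have "Cc / (Cc + 1) = 1 / (1 + dl)" unfolding Cc_def dl_def
    by (simp add: field_simps)
  moreover have "0 < dl" unfolding dl_def by simp
  ultimately show "1 - dl \<le> Cc / (Cc + 1)" by (simp add: le_divide_eq)
qed

lemma uu_bounds: "x \<in> cube \<Longrightarrow> 0 \<le> uu i x \<and> uu i x \<le> 1"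
  using ab unfolding cube_def uu_def by (auto simp: field_simps)

lemma tau_bounds: assumes "x \<in> cube" "s \<le> CARD('n)"
  shows "0 \<le> tau s i x" "tau s i x < T0"
proof -
  have u: "0 \<le> uu i x" "uu i x \<le> 1" using uu_bounds[OF assms(1)] by auto
  have s: "2 * real s / (real CARD('n) + 1) < 2" using assms(2) by (simp add: field_simps)
  show "0 \<le> tau s i x" unfolding tau_def using u by simp
  have "2 * real K * uu i x \<le> 2 * real K" using u by (simp add: mult_left_le)
  then show "tau s i x < T0" unfolding tau_def T0_def using s by simp
qed

lemma mI_bounds: assumes "x \<in> cube" "s \<le> CARD('n)"
  shows "0 \<le> mI s i x" "mI s i x < int PP"
proof -
  have t: "0 \<le> tau s i x" "tau s i x < 2 * real K + 2" using tau_bounds[OF assms] T0_def by auto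
  show "0 \<le> mI s i x" unfolding mI_def using t by simp
  have "(tau s i x + 1) / 2 < real K + 2" using t by simp
  then show "mI s i x < int PP" unfolding mI_def PP_def by linarith
qed

lemma tau_near: "\<bar>tau s i x - 2 * of_int (mI s i x)\<bar> \<le> 1"
  using sigma1_t_bounds[of "tau s i x"] unfolding mI_def by simp

lemma Fp_lower: "x \<in> cube \<Longrightarrow> s \<le> CARD('n) \<Longrightarrow> Fp s i x \<ge> -1"
proof -
  assume h: "x \<in> cube" "s \<le> CARD('n)"
  have v: "0 \<le> vv s i x" "vv s i x \<le> 1" unfolding vv_def using sigma1_nonneg sigma1_le1 by auto
  define M where "M = max 0 (vv s i x - Cc * max 0 (1/2 - ww s i x))"
  have "M \<le> vv s i x"
    using v dl_facts(5) unfolding M_def by (simp add: max_def)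
  moreover have "Fp s i x = tau s i x + vv s i x - 2 * M" unfolding Fp_def M_def by simp
  ultimately show ?thesis using tau_bounds(1)[OF h, of i] v by linarith
qed

lemma Fp_exact: assumes "betap s i x < 1"
  shows "Fp s i x = 2 * of_int (mI s i x)"
proof -
  have "max 0 (vv s i x - 1 + 2 * dl) < dl" using assms dl_facts(1)
    unfolding betap_def by (simp add: field_simps)
  then have "vv s i x < 1 - dl" by simp
  then have "sigma1 (tau s i x) \<le> Cc / (Cc + 1)" using dl_facts(4) unfolding vv_def by simp
  from stair[OF dl_facts(5) this] show ?thesis
    unfolding Fp_def vv_def ww_def mI_def by simp
qed

lemma betap_nonneg: "0 \<le> betap s i x" unfolding betap_def using dl_facts(1) by simp

lemma betap_le2: "betap s i x \<le> 2"
proof -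
  have "vv s i x \<le> 1" unfolding vv_def by (rule sigma1_le1)
  then have "max 0 (vv s i x - 1 + 2 * dl) \<le> 2 * dl" using dl_facts(1) by simp
  then have "(1/dl) * max 0 (vv s i x - 1 + 2 * dl) \<le> (1/dl) * (2 * dl)"
    using dl_facts(1) by (intro mult_left_mono) auto
  then show ?thesis unfolding betap_def using dl_facts(1) by simp
qed

lemma rhop_bounds: "0 \<le> rhop s x" "rhop s x \<le> 1"
  unfolding rhop_def using betap_nonneg by (auto intro: sum_nonneg)

lemma rhop_pos_exact: "rhop s x > 0 \<Longrightarrow> betap s i x < 1"
proof -
  assume "rhop s x > 0"
  then have "(\<Sum>i\<in>UNIV. betap s i x) < 1" unfolding rhop_def by simp
  moreover have "betap s i x \<le> (\<Sum>i\<in>UNIV. betap s i x)"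
    using betap_nonneg by (intro member_le_sum) auto
  ultimately show ?thesis by simp
qed

text \<open>pigeonhole over shifts\<close>

lemma aux_sep: "(D::real) > 0 \<Longrightarrow> (s - s' - k * D) * (2 / D) = 2 * s / D - 2 * s' / D - 2 * k"
  by (simp add: field_simps)

lemma shift_sep:
  fixes s s' :: nat and k :: int
  assumes "s \<le> CARD('n)" "s' \<le> CARD('n)" "s \<noteq> s'"
  shows "\<bar>2 * real s / (real CARD('n) + 1) - 2 * real s' / (real CARD('n) + 1) - 2 * of_int k\<bar> \<ge> 2 / (real CARD('n) + 1)"
proof -
  have D: "real CARD('n) + 1 > 0" by simp
  have "int s - int s' - k * (int CARD('n) + 1) \<noteq> 0"
  proof
    assume e: "int s - int s' - k * (int CARD('n) + 1) = 0"
    show False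
    proof (cases "k = 0")
      case True then show False using e assms by simp
    next
      case False
      then have "\<bar>k * (int CARD('n) + 1)\<bar> \<ge> int CARD('n) + 1" by (simp add: abs_mult)
      moreover have "\<bar>int s - int s'\<bar> \<le> int CARD('n)" using assms by auto
      ultimately show False using e by simp
    qed
  qed
  then have "\<bar>int s - int s' - k * (int CARD('n) + 1)\<bar> \<ge> 1" by linarith
  then have "(1::real) \<le> of_int \<bar>int s - int s' - k * (int CARD('n) + 1)\<bar>"
    by (simp only: of_int_le_iff[symmetric] of_int_1)
  then have "\<bar>real s - real s' - of_int k * (real CARD('n) + 1)\<bar> \<ge> 1"
    by simp
  then have "1 * (2 / (real CARD('n) + 1)) \<le> \<bar>real s - real s' - of_int k * (real CARD('n) + 1)\<bar> * (2 / (real CARD('n) + 1))"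
    using D by (intro mult_right_mono) auto
  then have "\<bar>real s - real s' - of_int k * (real CARD('n) + 1)\<bar> * (2 / (real CARD('n) + 1)) \<ge> 2 / (real CARD('n) + 1)"
    by simp
  moreover have "\<bar>real s - real s' - of_int k * (real CARD('n) + 1)\<bar> * (2 / (real CARD('n) + 1))
      = \<bar>2 * real s / (real CARD('n) + 1) - 2 * real s' / (real CARD('n) + 1) - 2 * of_int k\<bar>"
  proof -
    have "\<bar>real s - real s' - of_int k * (real CARD('n) + 1)\<bar> * (2 / (real CARD('n) + 1))
        = \<bar>(real s - real s' - of_int k * (real CARD('n) + 1)) * (2 / (real CARD('n) + 1))\<bar>"
      by (subst abs_mult) (use D in simp)
    also have "(real s - real s' - of_int k * (real CARD('n) + 1)) * (2 / (real CARD('n) + 1))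
        = 2 * real s / (real CARD('n) + 1) - 2 * real s' / (real CARD('n) + 1) - 2 * of_int k"
      using D by (rule aux_sep)
    finally show ?thesis .
  qed
  ultimately show ?thesis by simp
qed

lemma bad_unique:
  assumes "s \<le> CARD('n)" "s' \<le> CARD('n)" "vv s i x > 1 - 2 * dl" "vv s' i x > 1 - 2 * dl"
  shows "s = s'"
proof (rule ccontr)
  assume ne: "s \<noteq> s'"
  define y where "y = tau s i x"
  define y' where "y' = tau s' i x"
  define m where "m = \<lfloor>(y + 1) / 2\<rfloor>"
  define m' where "m' = \<lfloor>(y' + 1) / 2\<rfloor>"
  define t where "t = y - 2 * of_int m"
  define t' where "t' = y' - 2 * of_int m'"
  have tb: "-1 \<le> t" "t < 1" "-1 \<le> t'" "t' < 1" unfolding t_def t'_def m_def m'_def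
    using sigma1_t_bounds by auto
  have vt: "\<bar>t\<bar> > 1 - 2 * dl" "\<bar>t'\<bar> > 1 - 2 * dl"
  proof -
    have "vv s i x = \<bar>t\<bar>" unfolding vv_def sigma1_def t_def m_def y_def by (rule refl)
    moreover have "vv s' i x = \<bar>t'\<bar>" unfolding vv_def sigma1_def t'_def m'_def y'_def by (rule refl)
    ultimately show "\<bar>t\<bar> > 1 - 2 * dl" "\<bar>t'\<bar> > 1 - 2 * dl" using assms(3,4) by auto
  qed
  have dif: "y - y' = 2 * real s / (real CARD('n) + 1) - 2 * real s' / (real CARD('n) + 1)"
    unfolding y_def y'_def tau_def by simp
  have tt: "t > 1 - 2 * dl \<or> t < -(1 - 2 * dl)" "t' > 1 - 2 * dl \<or> t' < -(1 - 2 * dl)"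
    using vt by (auto simp: abs_if split: if_splits)
  have "\<exists>k::int. \<bar>t - t' - 2 * of_int k\<bar> < 4 * dl"
  proof -
    have d0: "0 < dl" by (rule dl_facts(1))
    consider "t > 1 - 2 * dl" "t' > 1 - 2 * dl" | "t < -(1 - 2 * dl)" "t' < -(1 - 2 * dl)"
      | "t > 1 - 2 * dl" "t' < -(1 - 2 * dl)" | "t < -(1 - 2 * dl)" "t' > 1 - 2 * dl"
      using tt by blast
    then show ?thesis
    proof cases
      case 1
      then have "t - t' - 2 * of_int (0::int) < 4 * dl" "-(t - t' - 2 * of_int (0::int)) < 4 * dl"
        using tb d0 by linarith+
      then have "\<bar>t - t' - 2 * of_int (0::int)\<bar> < 4 * dl" by (subst abs_less_iff) blast
      then show ?thesis by blast
    next
      case 2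
      then have "t - t' - 2 * of_int (0::int) < 4 * dl" "-(t - t' - 2 * of_int (0::int)) < 4 * dl"
        using tb d0 by linarith+
      then have "\<bar>t - t' - 2 * of_int (0::int)\<bar> < 4 * dl" by (subst abs_less_iff) blast
      then show ?thesis by blast
    next
      case 3
      then have "t - t' - 2 * of_int (1::int) < 4 * dl" "-(t - t' - 2 * of_int (1::int)) < 4 * dl"
        using tb d0 by simp_all
      then have "\<bar>t - t' - 2 * of_int (1::int)\<bar> < 4 * dl" by (subst abs_less_iff) blast
      then show ?thesis by blast
    next
      case 4
      then have "t - t' - 2 * of_int (-1::int) < 4 * dl" "-(t - t' - 2 * of_int (-1::int)) < 4 * dl"
        using tb d0 by simp_all
      then have "\<bar>t - t' - 2 * of_int (-1::int)\<bar> < 4 * dl" by (subst abs_less_iff) blast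
      then show ?thesis by blast
    qed
  qed
  then obtain k :: int where k: "\<bar>t - t' - 2 * of_int k\<bar> < 4 * dl" by blast
  have "y - y' - 2 * of_int (k + m - m') = t - t' - 2 * of_int k"
    unfolding t_def t'_def by simp
  then have "\<bar>2 * real s / (real CARD('n) + 1) - 2 * real s' / (real CARD('n) + 1) - 2 * of_int (k + m - m')\<bar> < 4 * dl"
    using k dif by simp
  moreover have "4 * dl < 2 / (real CARD('n) + 1)" unfolding dl_def by (simp add: field_simps)
  ultimately show False using shift_sep[OF assms(1,2) ne, of "k + m - m'"] by simp
qed

lemma good_shift:
  "\<exists>s\<le>CARD('n). \<forall>i. betap s i x = 0"
proof -
  define bad where "bad s i \<longleftrightarrow> vv s i x > 1 - 2 * dl" for s i
  define B where "B = {s\<in>{..CARD('n)}. \<exists>i. bad s i}"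
  define g where "g i = (THE s. s \<le> CARD('n) \<and> bad s i)" for i
  have "B \<subseteq> g ` UNIV"
  proof
    fix s assume "s \<in> B"
    then obtain i where i: "s \<le> CARD('n)" "bad s i" unfolding B_def by auto
    have "g i = s" unfolding g_def
    proof (rule the_equality)
      show "s \<le> CARD('n) \<and> bad s i" using i by simp
      fix s' assume "s' \<le> CARD('n) \<and> bad s' i"
      then show "s' = s" using bad_unique[of s' s i x] i unfolding bad_def by blast
    qed
    then show "s \<in> g ` UNIV" by blast
  qed
  then have "card B \<le> card (g ` (UNIV :: 'n set))" by (intro card_mono) auto
  also have "\<dots> \<le> CARD('n)" by (rule card_image_le) simp
  finally have "card B < card {..CARD('n)}" by simp
  moreover have "finite B" unfolding B_def by simp
  ultimately have "\<not> {..CARD('n)} \<subseteq> B"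
    using card_mono[of B "{..CARD('n)}"] by linarith
  then obtain s where s: "s \<le> CARD('n)" "s \<notin> B" by blast
  have "betap s i x = 0" for i
  proof -
    have "\<not> bad s i" using s unfolding B_def by blast
    then show ?thesis unfolding betap_def bad_def by simp
  qed
  then show ?thesis using s by blast
qed

lemma sum_rhop_ge1: "(\<Sum>s\<le>CARD('n). rhop s x) \<ge> 1"
proof -
  obtain s where s: "s \<le> CARD('n)" "\<forall>i. betap s i x = 0" using good_shift by blast
  have "rhop s x = 1" unfolding rhop_def using s by simp
  moreover have "rhop s x \<le> (\<Sum>s\<le>CARD('n). rhop s x)"
    using s rhop_bounds by (intro member_le_sum) auto
  ultimately show ?thesis by simp
qed

lemma code_digits:
  assumes "x \<in> cube" "s \<le> CARD('n)"
    and A_def: "\<And>j. A j = (if j < CARD('n) then nat (mI s (ei j) x) else s)"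
  shows "(\<Sum>j<Suc CARD('n). A j * PP ^ j) = code s x" "\<forall>j<Suc CARD('n). A j < PP"
proof -
  have "(\<Sum>j<Suc CARD('n). A j * PP ^ j) = (\<Sum>j<CARD('n). A j * PP ^ j) + A CARD('n) * PP ^ CARD('n)"
    by (rule sum.lessThan_Suc)
  also have "(\<Sum>j<CARD('n). A j * PP ^ j) = (\<Sum>j<CARD('n). nat (mI s (ei j) x) * PP ^ j)"
    by (rule sum.cong) (simp_all add: A_def)
  also have "A CARD('n) = s" by (simp add: A_def)
  finally show "(\<Sum>j<Suc CARD('n). A j * PP ^ j) = code s x" unfolding code_def .
  have PPd: "CARD('n) < PP" unfolding PP_def using Kd by simp
  show "\<forall>j<Suc CARD('n). A j < PP"
  proof (intro allI impI)
    fix j assume j: "j < Suc CARD('n)"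
    show "A j < PP"
    proof (cases "j < CARD('n)")
      case True
      have "0 \<le> mI s (ei j) x" "mI s (ei j) x < int PP" using mI_bounds[OF assms(1,2)] by auto
      then have "nat (mI s (ei j) x) < PP" by linarith
      then show ?thesis using True by (simp add: A_def)
    next
      case False
      then show ?thesis using PPd assms(2) by (simp add: A_def)
    qed
  qed
qed

lemma code_eq:
  assumes "x \<in> cube" "x' \<in> cube" "s \<le> CARD('n)" "s' \<le> CARD('n)" "code s x = code s' x'"
  shows "s = s' \<and> (\<forall>i. mI s i x = mI s' i x')"
proof -
  define A where "A = (\<lambda>j. if j < CARD('n) then nat (mI s (ei j) x) else s)"
  define B where "B = (\<lambda>j. if j < CARD('n) then nat (mI s' (ei j) x') else s')"
  note DA = code_digits[OF assms(1,3), of A, OF fun_cong[OF A_def]]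
  note DB = code_digits[OF assms(2,4), of B, OF fun_cong[OF B_def]]
  have "(\<Sum>j<Suc CARD('n). A j * PP ^ j) = (\<Sum>j<Suc CARD('n). B j * PP ^ j)"
    by (simp only: DA(1) DB(1) assms(5))
  from digits_inj[OF DA(2) DB(2) this] have AB: "\<forall>j<Suc CARD('n). A j = B j" .
  have ss: "s = s'" using AB[rule_format, of "CARD('n)"] unfolding A_def B_def by simp
  have "mI s i x = mI s' i x'" for i
  proof -
    have "i \<in> ei ` {..<CARD('n)}" using ei unfolding bij_betw_def by simp
    then obtain j where j: "j < CARD('n)" "ei j = i" by auto
    have "A j = B j" using AB j by simp
    then have "nat (mI s i x) = nat (mI s' i x')" using j unfolding A_def B_def by simp
    then show ?thesis using mI_bounds(1)[OF assms(1,3), of i] mI_bounds(1)[OF assms(2,4), of i] by simp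
  qed
  then show ?thesis using ss by simp
qed

lemma code_close:
  assumes "x \<in> cube" "x' \<in> cube" "s \<le> CARD('n)" "s' \<le> CARD('n)" "code s x = code s' x'"
  shows "\<bar>x $ i - x' $ i\<bar> \<le> (b - a) / real K"
proof -
  have e: "s = s'" "mI s i x = mI s i x'" using code_eq[OF assms] by auto
  have "\<bar>tau s i x - tau s i x'\<bar> \<le> 2"
    using tau_near[of s i x] tau_near[of s i x'] e(2) by linarith
  moreover have "tau s i x - tau s i x' = 2 * real K * (uu i x - uu i x')"
    unfolding tau_def by (simp add: algebra_simps)
  moreover have "uu i x - uu i x' = (x $ i - x' $ i) / (b - a)"
    unfolding uu_def by (simp add: diff_divide_distrib)
  ultimately have "\<bar>2 * real K * (x $ i - x' $ i) / (b - a)\<bar> \<le> 2" by simp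
  then have "2 * real K * \<bar>x $ i - x' $ i\<bar> / (b - a) \<le> 2" using ab by (simp add: abs_mult abs_div)
  then have "real K * \<bar>x $ i - x' $ i\<bar> \<le> (b - a)" using ab by (simp add: field_simps)
  then show ?thesis using K1 by (simp add: field_simps)
qed

lemma code_bound: "x \<in> cube \<Longrightarrow> s \<le> CARD('n) \<Longrightarrow> code s x < PP ^ Suc CARD('n)"
proof -
  assume h: "x \<in> cube" "s \<le> CARD('n)"
  define A where "A = (\<lambda>j. if j < CARD('n) then nat (mI s (ei j) x) else s)"
  note DA = code_digits[OF h, of A, OF fun_cong[OF A_def]]
  show ?thesis using digits_bound[OF DA(2)] DA(1) by simp
qed

end


lemma max_scale: "(C::real) > 0 \<Longrightarrow> C * max 0 (y / C) = max 0 y"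
  by (simp add: max_def field_simps)

locale net = geo a b K ei for a b :: real and K :: nat and ei :: "nat \<Rightarrow> 'n::finite" +
  fixes c t off hh :: real and koff :: int
  assumes c_big: "c > 1 + real (CARD('n) * (K + 2) ^ CARD('n))"
    and off_eq: "off = 2 * of_int koff" and off_ge: "off \<ge> 2 * \<bar>t\<bar>"
    and h_pos: "0 < hh" and h_le: "hh \<le> 1/6" and h_small: "28 * (real CARD('n) + 1) * hh^2 \<le> 1"
begin

definition SI :: "(nat \<times> 'n) set" where "SI = {..CARD('n)} \<times> UNIV"

definition "n1v s i = (\<lambda>x. euaf (tau s i x))"
definition "n1w s i = (\<lambda>x. euaf (tau s i x + 1/2))"
definition "n1t s i = (\<lambda>x. euaf (tau s i x / T0))"
definition "L1 = (\<lambda>(s,i). n1v s i) ` SI \<union> (\<lambda>(s,i). n1w s i) ` SI \<union> (\<lambda>(s,i). n1t s i) ` SI"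

definition "n2a s i = (\<lambda>x. euaf (((1/2 - n1w s i x) + 1) / 2))"
definition "n2b s i = (\<lambda>x. euaf ((1/2 - n1w s i x) + 2))"
definition "n2v s i = (\<lambda>x. euaf (n1v s i x))"
definition "n2t s i = (\<lambda>x. euaf (n1t s i x))"
definition "n2c s i = (\<lambda>x. euaf (((n1v s i x - 1 + 2 * dl) + 1) / 2))"
definition "n2d s i = (\<lambda>x. euaf ((n1v s i x - 1 + 2 * dl) + 2))"
definition "L2 = (\<lambda>(s,i). n2a s i) ` SI \<union> (\<lambda>(s,i). n2b s i) ` SI \<union> (\<lambda>(s,i). n2v s i) ` SI
   \<union> (\<lambda>(s,i). n2t s i) ` SI \<union> (\<lambda>(s,i). n2c s i) ` SI \<union> (\<lambda>(s,i). n2d s i) ` SI"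

definition "R1 s i x = (2 * n2a s i x - 1 + n2b s i x) / 2"
definition "beta s i x = (1 / dl) * ((2 * n2c s i x - 1 + n2d s i x) / 2)"

definition "z3 s i x = (n2v s i x - Cc * R1 s i x) / Cc"
definition "n3a s i = (\<lambda>x. euaf ((z3 s i x + 1) / 2))"
definition "n3b s i = (\<lambda>x. euaf (z3 s i x + 2))"
definition "n3v s i = (\<lambda>x. euaf (n2v s i x))"
definition "n3t s i = (\<lambda>x. euaf (n2t s i x))"
definition "zr s x = (1 - (\<Sum>i\<in>UNIV. beta s i x)) / (2 * real CARD('n) + 1)"
definition "n3p s = (\<lambda>x. euaf ((zr s x + 1) / 2))"
definition "n3q s = (\<lambda>x. euaf (zr s x + 2))"
definition "L3 = (\<lambda>(s,i). n3a s i) ` SI \<union> (\<lambda>(s,i). n3b s i) ` SI \<union> (\<lambda>(s,i). n3v s i) ` SI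
   \<union> (\<lambda>(s,i). n3t s i) ` SI \<union> n3p ` {..CARD('n)} \<union> n3q ` {..CARD('n)}"

definition "FF s i x = T0 * n3t s i x + n3v s i x - 2 * Cc * ((2 * n3a s i x - 1 + n3b s i x) / 2)"
definition "rho s x = (2 * real CARD('n) + 1) * ((2 * n3p s x - 1 + n3q s x) / 2)"
definition "nn s x = (\<Sum>j<CARD('n). FF s (ei j) x / 2 * real PP ^ j) + real s * real PP ^ CARD('n)"

definition "n4h s = (\<lambda>x. euaf (1 - nn s x - c))"
definition "n4r s = (\<lambda>x. euaf (rho s x))"
definition "L4 = n4h ` {..CARD('n)} \<union> n4r ` {..CARD('n)}"

definition "n5g s = (\<lambda>x. euaf (2 * t * (n4h s x + 1) + off))"
definition "n5r s = (\<lambda>x. euaf (n4r s x))"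
definition "L5 = n5g ` {..CARD('n)} \<union> n5r ` {..CARD('n)}"

definition "n6a s = (\<lambda>x. euaf (-1 + hh * (n5r s x + n5g s x)))"
definition "n6b s = (\<lambda>x. euaf (-1 - hh * (n5r s x + n5g s x)))"
definition "n6c s = (\<lambda>x. euaf (-1 + hh * (n5r s x - n5g s x)))"
definition "n6d s = (\<lambda>x. euaf (-1 - hh * (n5r s x - n5g s x)))"
definition "n6z = (\<lambda>x. euaf (1 - (\<Sum>s\<le>CARD('n). n5r s x)))"
definition "L6 = n6a ` {..CARD('n)} \<union> n6b ` {..CARD('n)} \<union> n6c ` {..CARD('n)} \<union> n6d ` {..CARD('n)} \<union> {n6z}"

definition "pr6 s x = (4 * (n6a s x + n6b s x + 1) / hh^2 - 4 * (n6c s x + n6d s x + 1) / hh^2) / 4"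
definition "av x = (\<Sum>s\<le>CARD('n). pr6 s x) / (real CARD('n) + 1)"
definition "RR x = n6z x + 1"
definition "n7a = (\<lambda>x. euaf (-1 + hh * (av x + RR x)))"
definition "n7b = (\<lambda>x. euaf (-1 - hh * (av x + RR x)))"
definition "n7c = (\<lambda>x. euaf (-1 + hh * (av x - RR x)))"
definition "n7d = (\<lambda>x. euaf (-1 - hh * (av x - RR x)))"
definition "L7 = {n7a, n7b, n7c, n7d}"

definition "psi x = (real CARD('n) + 1) * ((4 * (n7a x + n7b x + 1) / hh^2 - 4 * (n7c x + n7d x + 1) / hh^2) / 4)"
definition "n8 = (\<lambda>x. euaf ((psi x + 1) / 3))"
definition "n9 = (\<lambda>x. euaf (n8 x))"
definition "n10 = (\<lambda>x. euaf (n9 x))"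
definition "n11 = (\<lambda>x. euaf (n10 x))"
definition "phi AA MM x = AA * (3 * n11 x - 1) - MM"

definition "Ls (k::nat) = (if k = 0 then L1 else if k = 1 then L2 else if k = 2 then L3 else if k = 3 then L4
  else if k = 4 then L5 else if k = 5 then L6 else if k = 6 then L7 else if k = 7 then {n8}
  else if k = 8 then {n9} else if k = 9 then {n10} else {n11})"

lemma finSI: "finite SI" unfolding SI_def by simp
lemma cardSI: "card SI = (CARD('n) + 1) * CARD('n)" unfolding SI_def by (simp add: card_cartesian_product)

lemma fins: "finite L1" "finite L2" "finite L3" "finite L4" "finite L5" "finite L6" "finite L7"
  unfolding L1_def L2_def L3_def L4_def L5_def L6_def L7_def using finSI by auto

lemma card_img: "finite X \<Longrightarrow> card (f ` X) \<le> card X" by (rule card_image_le)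

lemma card_Un3: "finite A \<Longrightarrow> finite B \<Longrightarrow> card (A \<union> B) \<le> card A + card B" by (rule card_Un_le)

lemma card_Un6: "card (A \<union> B \<union> C \<union> D \<union> E \<union> F) \<le> card A + card B + card C + card D + card E + card F"
proof -
  have "card (A \<union> B \<union> C \<union> D \<union> E \<union> F) \<le> card (A \<union> B \<union> C \<union> D \<union> E) + card F" by (rule card_Un_le)
  moreover have "card (A \<union> B \<union> C \<union> D \<union> E) \<le> card (A \<union> B \<union> C \<union> D) + card E" by (rule card_Un_le)
  moreover have "card (A \<union> B \<union> C \<union> D) \<le> card (A \<union> B \<union> C) + card D" by (rule card_Un_le)
  moreover have "card (A \<union> B \<union> C) \<le> card (A \<union> B) + card C" by (rule card_Un_le)
  moreover have "card (A \<union> B) \<le> card A + card B" by (rule card_Un_le)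
  ultimately show ?thesis by linarith
qed

lemma cards: "card L1 \<le> 36 * CARD('n) * (2 * CARD('n) + 1)" "card L2 \<le> 36 * CARD('n) * (2 * CARD('n) + 1)"
  "card L3 \<le> 36 * CARD('n) * (2 * CARD('n) + 1)" "card L4 \<le> 36 * CARD('n) * (2 * CARD('n) + 1)"
  "card L5 \<le> 36 * CARD('n) * (2 * CARD('n) + 1)" "card L6 \<le> 36 * CARD('n) * (2 * CARD('n) + 1)"
  "card L7 \<le> 36 * CARD('n) * (2 * CARD('n) + 1)"
proof -
  define D where "D = CARD('n)"
  have D1: "1 \<le> D" unfolding D_def by simp
  obtain Q where Q: "Q = (D + 1) * D" by blast
  obtain RB where RB: "RB = 36 * D * (2 * D + 1)" by blast
  have cS: "card (f ` SI) \<le> Q" for f :: "nat \<times> 'n \<Rightarrow> (real^'n \<Rightarrow> real)"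
    using card_img[OF finSI, of f] cardSI unfolding D_def Q by simp
  have cD: "card (f ` {..D}) \<le> D + 1" for f :: "nat \<Rightarrow> (real^'n \<Rightarrow> real)"
    using card_img[of "{..D}" f] by simp
  have big0: "6 * ((D + 1) * D) + 2 * (D + 1) + 4 * (D+1) + 1 \<le> 36 * D * (2 * D + 1)"
  proof -
    have "6 * ((D + 1) * D) + 2 * (D + 1) + 4 * (D+1) + 1 \<le> 6 * D * D + 19 * D"
      using D1 by (simp add: algebra_simps)
    also have "\<dots> \<le> 72 * D * D + 36 * D" by simp
    finally show ?thesis by (simp add: algebra_simps)
  qed
  have big: "6 * Q + 6 * (D + 1) + 1 \<le> RB" using big0 unfolding Q RB by simp
  have RBe: "36 * D * (2 * D + 1) = RB" unfolding RB ..
  have u: "card (A \<union> B) \<le> card A + card B" for A B :: "(real^'n \<Rightarrow> real) set" by (rule card_Un_le)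
  show "card L1 \<le> 36 * CARD('n) * (2 * CARD('n) + 1)"
    unfolding L1_def D_def[symmetric] RBe
    using u[of "(\<lambda>(s,i). n1v s i) ` SI \<union> (\<lambda>(s,i). n1w s i) ` SI" "(\<lambda>(s,i). n1t s i) ` SI"]
      u[of "(\<lambda>(s,i). n1v s i) ` SI" "(\<lambda>(s,i). n1w s i) ` SI"]
      cS[of "\<lambda>(s,i). n1v s i"] cS[of "\<lambda>(s,i). n1w s i"] cS[of "\<lambda>(s,i). n1t s i"] big by linarith
  show "card L2 \<le> 36 * CARD('n) * (2 * CARD('n) + 1)"
    unfolding L2_def D_def[symmetric] RBe
    using u[of "(\<lambda>(s,i). n2a s i) ` SI \<union> (\<lambda>(s,i). n2b s i) ` SI \<union> (\<lambda>(s,i). n2v s i) ` SI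
   \<union> (\<lambda>(s,i). n2t s i) ` SI \<union> (\<lambda>(s,i). n2c s i) ` SI" "(\<lambda>(s,i). n2d s i) ` SI"]
      u[of "(\<lambda>(s,i). n2a s i) ` SI \<union> (\<lambda>(s,i). n2b s i) ` SI \<union> (\<lambda>(s,i). n2v s i) ` SI
   \<union> (\<lambda>(s,i). n2t s i) ` SI" "(\<lambda>(s,i). n2c s i) ` SI"]
      u[of "(\<lambda>(s,i). n2a s i) ` SI \<union> (\<lambda>(s,i). n2b s i) ` SI \<union> (\<lambda>(s,i). n2v s i) ` SI" "(\<lambda>(s,i). n2t s i) ` SI"]
      u[of "(\<lambda>(s,i). n2a s i) ` SI \<union> (\<lambda>(s,i). n2b s i) ` SI" "(\<lambda>(s,i). n2v s i) ` SI"]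
      u[of "(\<lambda>(s,i). n2a s i) ` SI" "(\<lambda>(s,i). n2b s i) ` SI"]
      cS[of "\<lambda>(s,i). n2a s i"] cS[of "\<lambda>(s,i). n2b s i"] cS[of "\<lambda>(s,i). n2v s i"]
      cS[of "\<lambda>(s,i). n2t s i"] cS[of "\<lambda>(s,i). n2c s i"] cS[of "\<lambda>(s,i). n2d s i"] big by linarith
  show "card L3 \<le> 36 * CARD('n) * (2 * CARD('n) + 1)"
  proof -
    have "card L3 \<le> card ((\<lambda>(s,i). n3a s i) ` SI) + card ((\<lambda>(s,i). n3b s i) ` SI) + card ((\<lambda>(s,i). n3v s i) ` SI)
      + card ((\<lambda>(s,i). n3t s i) ` SI) + card (n3p ` {..D}) + card (n3q ` {..D})"
      unfolding L3_def D_def[symmetric] by (rule card_Un6)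
    also have "\<dots> \<le> Q + Q + Q + Q + (D + 1) + (D + 1)"
      by (intro add_mono cS cD)
    also have "\<dots> \<le> RB" using big by presburger
    finally show ?thesis unfolding D_def[symmetric] RBe .
  qed
  show "card L4 \<le> 36 * CARD('n) * (2 * CARD('n) + 1)"
  proof -
    have "card L4 \<le> card (n4h ` {..D}) + card (n4r ` {..D})"
      unfolding L4_def D_def[symmetric] by (rule card_Un_le)
    also have "\<dots> \<le> (D + 1) + (D + 1)" by (intro add_mono cD)
    also have "\<dots> \<le> RB" using big by presburger
    finally show ?thesis unfolding D_def[symmetric] RBe .
  qed
  show "card L5 \<le> 36 * CARD('n) * (2 * CARD('n) + 1)"
  proof -
    have "card L5 \<le> card (n5g ` {..D}) + card (n5r ` {..D})"
      unfolding L5_def D_def[symmetric] by (rule card_Un_le)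
    also have "\<dots> \<le> (D + 1) + (D + 1)" by (intro add_mono cD)
    also have "\<dots> \<le> RB" using big by presburger
    finally show ?thesis unfolding D_def[symmetric] RBe .
  qed
  show "card L6 \<le> 36 * CARD('n) * (2 * CARD('n) + 1)"
  proof -
    have "card L6 \<le> card (n6a ` {..D}) + card (n6b ` {..D}) + card (n6c ` {..D}) + card (n6d ` {..D}) + card {n6z}"
    proof -
      have "card L6 \<le> card (n6a ` {..D} \<union> n6b ` {..D} \<union> n6c ` {..D} \<union> n6d ` {..D}) + card {n6z}"
        unfolding L6_def D_def[symmetric] by (rule card_Un_le)
      moreover have "card (n6a ` {..D} \<union> n6b ` {..D} \<union> n6c ` {..D} \<union> n6d ` {..D}) \<le>
          card (n6a ` {..D} \<union> n6b ` {..D} \<union> n6c ` {..D}) + card (n6d ` {..D})" by (rule card_Un_le)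
      moreover have "card (n6a ` {..D} \<union> n6b ` {..D} \<union> n6c ` {..D}) \<le>
          card (n6a ` {..D} \<union> n6b ` {..D}) + card (n6c ` {..D})" by (rule card_Un_le)
      moreover have "card (n6a ` {..D} \<union> n6b ` {..D}) \<le> card (n6a ` {..D}) + card (n6b ` {..D})" by (rule card_Un_le)
      ultimately show ?thesis by linarith
    qed
    also have "\<dots> \<le> (D + 1) + (D + 1) + (D + 1) + (D + 1) + 1" by (intro add_mono cD) simp
    also have "\<dots> \<le> RB" using big by presburger
    finally show ?thesis unfolding D_def[symmetric] RBe .
  qed
  show "card L7 \<le> 36 * CARD('n) * (2 * CARD('n) + 1)"
  proof -
    have "card L7 \<le> 4" unfolding L7_def by (simp add: card_insert_le_m1)
    also have "4 \<le> RB" using big by presburger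
    finally show ?thesis unfolding D_def[symmetric] RBe .
  qed
qed

lemmas aff_intros = aff_add aff_diff aff_scale aff_div aff_minus aff_const

lemma lay_Un: "lay S A \<Longrightarrow> lay S B \<Longrightarrow> lay S (A \<union> B)" unfolding lay_def by blast
lemma lay_img: "(\<And>p. p \<in> X \<Longrightarrow> \<exists>h\<in>aff S. f p = (\<lambda>x. euaf (h x))) \<Longrightarrow> lay S (f ` X)"
  unfolding lay_def by blast
lemma lay_ins: "(\<exists>h\<in>aff S. g = (\<lambda>x. euaf (h x))) \<Longrightarrow> lay S T \<Longrightarrow> lay S (insert g T)"
  unfolding lay_def by blast
lemma lay_img2: "(\<And>s i. s \<le> CARD('n) \<Longrightarrow> \<exists>h\<in>aff S. f s i = (\<lambda>x. euaf (h x))) \<Longrightarrow> lay S ((\<lambda>(s,i). f s i) ` SI)"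
  unfolding lay_def SI_def by auto
lemma lay_imgd: "(\<And>s. s \<le> CARD('n) \<Longrightarrow> \<exists>h\<in>aff S. f s = (\<lambda>x. euaf (h x))) \<Longrightarrow> lay S (f ` {..CARD('n)})"
  unfolding lay_def by auto
lemma lay_empty: "lay S {}" unfolding lay_def by blast
lemma ex_aff: "h \<in> aff S \<Longrightarrow> \<exists>h'\<in>aff S. (\<lambda>x. euaf (h x)) = (\<lambda>x. euaf (h' x))" by blast

lemma mem1: "s \<le> CARD('n) \<Longrightarrow> n1v s i \<in> L1 \<and> n1w s i \<in> L1 \<and> n1t s i \<in> L1"
  unfolding L1_def SI_def by auto
lemma mem2: "s \<le> CARD('n) \<Longrightarrow> n2a s i \<in> L2 \<and> n2b s i \<in> L2 \<and> n2v s i \<in> L2 \<and> n2t s i \<in> L2 \<and> n2c s i \<in> L2 \<and> n2d s i \<in> L2"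
  unfolding L2_def SI_def by auto
lemma mem3: "s \<le> CARD('n) \<Longrightarrow> n3a s i \<in> L3 \<and> n3b s i \<in> L3 \<and> n3v s i \<in> L3 \<and> n3t s i \<in> L3 \<and> n3p s \<in> L3 \<and> n3q s \<in> L3"
  unfolding L3_def SI_def by auto
lemma mem4: "s \<le> CARD('n) \<Longrightarrow> n4h s \<in> L4 \<and> n4r s \<in> L4" unfolding L4_def by auto
lemma mem5: "s \<le> CARD('n) \<Longrightarrow> n5g s \<in> L5 \<and> n5r s \<in> L5" unfolding L5_def by auto
lemma mem6: "s \<le> CARD('n) \<Longrightarrow> n6a s \<in> L6 \<and> n6b s \<in> L6 \<and> n6c s \<in> L6 \<and> n6d s \<in> L6" "n6z \<in> L6"
  unfolding L6_def by auto

lemma affm1: "s \<le> CARD('n) \<Longrightarrow> n1v s i \<in> aff L1 \<and> n1w s i \<in> aff L1 \<and> n1t s i \<in> aff L1"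
  using mem1 aff_mem[OF fins(1)] by blast
lemma affm2: "s \<le> CARD('n) \<Longrightarrow> n2a s i \<in> aff L2 \<and> n2b s i \<in> aff L2 \<and> n2v s i \<in> aff L2 \<and> n2t s i \<in> aff L2 \<and> n2c s i \<in> aff L2 \<and> n2d s i \<in> aff L2"
  using mem2 aff_mem[OF fins(2)] by blast
lemma affm3: "s \<le> CARD('n) \<Longrightarrow> n3a s i \<in> aff L3 \<and> n3b s i \<in> aff L3 \<and> n3v s i \<in> aff L3 \<and> n3t s i \<in> aff L3 \<and> n3p s \<in> aff L3 \<and> n3q s \<in> aff L3"
  using mem3 aff_mem[OF fins(3)] by blast
lemma affm4: "s \<le> CARD('n) \<Longrightarrow> n4h s \<in> aff L4 \<and> n4r s \<in> aff L4"
  using mem4 aff_mem[OF fins(4)] by blast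
lemma affm5: "s \<le> CARD('n) \<Longrightarrow> n5g s \<in> aff L5 \<and> n5r s \<in> aff L5"
  using mem5 aff_mem[OF fins(5)] by blast
lemma affm6: "s \<le> CARD('n) \<Longrightarrow> n6a s \<in> aff L6 \<and> n6b s \<in> aff L6 \<and> n6c s \<in> aff L6 \<and> n6d s \<in> aff L6" "n6z \<in> aff L6"
  using mem6 aff_mem[OF fins(6)] by blast+

lemma affR1: "s \<le> CARD('n) \<Longrightarrow> R1 s i \<in> aff L2"
proof -
  assume "s \<le> CARD('n)"
  note m = affm2[OF this, of i]
  have "(\<lambda>x. (2 * n2a s i x - 1 + n2b s i x) / 2) \<in> aff L2"
    by (intro aff_intros) (use m in auto)
  then show ?thesis unfolding R1_def[abs_def] .
qed

lemma affbeta: "s \<le> CARD('n) \<Longrightarrow> beta s i \<in> aff L2"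
proof -
  assume "s \<le> CARD('n)"
  note m = affm2[OF this, of i]
  have "(\<lambda>x. (1 / dl) * ((2 * n2c s i x - 1 + n2d s i x) / 2)) \<in> aff L2"
    by (intro aff_intros) (use m in auto)
  then show ?thesis unfolding beta_def[abs_def] .
qed

lemma affz3: "s \<le> CARD('n) \<Longrightarrow> z3 s i \<in> aff L2"
proof -
  assume s: "s \<le> CARD('n)"
  note m = affm2[OF s, of i]
  have "(\<lambda>x. (n2v s i x - Cc * R1 s i x) / Cc) \<in> aff L2"
    by (intro aff_intros) (use m affR1[OF s, of i] in auto)
  then show ?thesis unfolding z3_def[abs_def] .
qed

lemma affzr: "s \<le> CARD('n) \<Longrightarrow> zr s \<in> aff L2"
proof -
  assume s: "s \<le> CARD('n)"
  have "(\<lambda>x. (\<Sum>i\<in>UNIV. beta s i x)) \<in> aff L2"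
    by (rule aff_sum) (use affbeta[OF s] in auto)
  then have "(\<lambda>x. (1 - (\<Sum>i\<in>UNIV. beta s i x)) / (2 * real CARD('n) + 1)) \<in> aff L2"
    by (intro aff_intros) auto
  then show ?thesis unfolding zr_def[abs_def] .
qed

lemma affFF: "s \<le> CARD('n) \<Longrightarrow> FF s i \<in> aff L3"
proof -
  assume s: "s \<le> CARD('n)"
  note m = affm3[OF s, of i]
  have "(\<lambda>x. T0 * n3t s i x + n3v s i x - 2 * Cc * ((2 * n3a s i x - 1 + n3b s i x) / 2)) \<in> aff L3"
    by (intro aff_intros) (use m in auto)
  then show ?thesis unfolding FF_def[abs_def] .
qed

lemma affrho: "s \<le> CARD('n) \<Longrightarrow> rho s \<in> aff L3"
proof -
  assume s: "s \<le> CARD('n)"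
  note m = affm3[OF s, of undefined]
  have "(\<lambda>x. (2 * real CARD('n) + 1) * ((2 * n3p s x - 1 + n3q s x) / 2)) \<in> aff L3"
    by (intro aff_intros) (use m in auto)
  then show ?thesis unfolding rho_def[abs_def] .
qed

lemma affnn: "s \<le> CARD('n) \<Longrightarrow> nn s \<in> aff L3"
proof -
  assume s: "s \<le> CARD('n)"
  have "(\<lambda>x. (\<Sum>j<CARD('n). FF s (ei j) x / 2 * real PP ^ j)) \<in> aff L3"
    by (rule aff_sum) (auto intro!: aff_intros aff_scale_r simp: affFF[OF s])
  then have "(\<lambda>x. (\<Sum>j<CARD('n). FF s (ei j) x / 2 * real PP ^ j) + real s * real PP ^ CARD('n)) \<in> aff L3"
    by (intro aff_intros) auto
  then show ?thesis unfolding nn_def[abs_def] .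
qed

lemma affpr6: "s \<le> CARD('n) \<Longrightarrow> pr6 s \<in> aff L6"
proof -
  assume s: "s \<le> CARD('n)"
  note m = affm6(1)[OF s]
  have "(\<lambda>x. (4 * (n6a s x + n6b s x + 1) / hh^2 - 4 * (n6c s x + n6d s x + 1) / hh^2) / 4) \<in> aff L6"
    by (intro aff_intros) (use m in auto)
  then show ?thesis unfolding pr6_def[abs_def] .
qed

lemma affav: "av \<in> aff L6"
proof -
  have "(\<lambda>x. (\<Sum>s\<le>CARD('n). pr6 s x)) \<in> aff L6"
    by (rule aff_sum) (use affpr6 in auto)
  then have "(\<lambda>x. (\<Sum>s\<le>CARD('n). pr6 s x) / (real CARD('n) + 1)) \<in> aff L6"
    by (intro aff_intros)
  then show ?thesis unfolding av_def[abs_def] .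
qed

lemma affRR: "RR \<in> aff L6"
proof -
  have "(\<lambda>x. n6z x + 1) \<in> aff L6" by (intro aff_intros) (use affm6(2) in auto)
  then show ?thesis unfolding RR_def[abs_def] .
qed

lemma affpsi: "psi \<in> aff L7"
proof -
  have m: "n7a \<in> aff L7" "n7b \<in> aff L7" "n7c \<in> aff L7" "n7d \<in> aff L7"
    using aff_mem[OF fins(7)] unfolding L7_def by auto
  have "(\<lambda>x. (real CARD('n) + 1) * ((4 * (n7a x + n7b x + 1) / hh^2 - 4 * (n7c x + n7d x + 1) / hh^2) / 4)) \<in> aff L7"
    by (intro aff_intros) (use m in auto)
  then show ?thesis unfolding psi_def[abs_def] .
qed

lemma lay1: "lay L1 L2"
proof -
  have A: "\<And>s i. s \<le> CARD('n) \<Longrightarrow> n1v s i \<in> aff L1" "\<And>s i. s \<le> CARD('n) \<Longrightarrow> n1w s i \<in> aff L1"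
    "\<And>s i. s \<le> CARD('n) \<Longrightarrow> n1t s i \<in> aff L1" using affm1 by auto
  show ?thesis unfolding L2_def
    by (intro lay_Un lay_img2; unfold n2a_def n2b_def n2v_def n2t_def n2c_def n2d_def;
        intro ex_aff aff_intros; blast intro: A)
qed

lemma A2s: "s \<le> CARD('n) \<Longrightarrow> n2v s i \<in> aff L2" "s \<le> CARD('n) \<Longrightarrow> n2t s i \<in> aff L2"
  using affm2 by auto
lemma A4s: "s \<le> CARD('n) \<Longrightarrow> n4h s \<in> aff L4" "s \<le> CARD('n) \<Longrightarrow> n4r s \<in> aff L4"
  using affm4 by auto
lemma A5s: "s \<le> CARD('n) \<Longrightarrow> n5g s \<in> aff L5" "s \<le> CARD('n) \<Longrightarrow> n5r s \<in> aff L5"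
  using affm5 by auto

lemma lay2: "lay L2 L3"
  unfolding L3_def
  by (intro lay_Un lay_img2 lay_imgd; unfold n3a_def n3b_def n3v_def n3t_def n3p_def n3q_def;
      intro ex_aff aff_intros; blast intro: affz3 affzr A2s)

lemma lay3: "lay L3 L4"
  unfolding L4_def
  by (intro lay_Un lay_imgd; unfold n4h_def n4r_def;
      intro ex_aff aff_intros; blast intro: affnn affrho)

lemma lay4: "lay L4 L5"
  unfolding L5_def
  by (intro lay_Un lay_imgd; unfold n5g_def n5r_def;
      intro ex_aff aff_intros; blast intro: A4s)

lemma lay5: "lay L5 L6"
proof -
  have z: "(\<lambda>x. (\<Sum>s\<le>CARD('n). n5r s x)) \<in> aff L5" by (rule aff_sum) (use A5s in auto)
  show ?thesis
    unfolding L6_def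
    by (intro lay_Un lay_imgd lay_ins lay_empty; unfold n6a_def n6b_def n6c_def n6d_def n6z_def;
        intro ex_aff aff_intros; blast intro: A5s z)
qed

lemma lay6: "lay L6 L7"
  unfolding L7_def
  by (intro lay_ins lay_empty; unfold n7a_def n7b_def n7c_def n7d_def;
      intro ex_aff aff_intros; blast intro: affav affRR)

lemma lay7: "lay L7 {n8}"
  by (intro lay_ins lay_empty; unfold n8_def; intro ex_aff aff_intros; blast intro: affpsi)

lemma aff_single: "g \<in> aff {g}" by (rule aff_mem) auto

lemma lay8: "lay {n8} {n9}" "lay {n9} {n10}" "lay {n10} {n11}"
  by (intro lay_ins lay_empty; unfold n9_def n10_def n11_def; intro ex_aff aff_single)+

lemma tau_lin: "tau s i x = (\<Sum>j\<in>UNIV. (if j = i then 2 * real K / (b - a) else 0) * x $ j)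
   + (2 * real s / (real CARD('n) + 1) - 2 * real K * a / (b - a))"
proof -
  have "(\<Sum>j\<in>UNIV. (if j = i then 2 * real K / (b - a) else 0) * x $ j)
      = (\<Sum>j\<in>UNIV. (if j = i then 2 * real K / (b - a) * x $ j else 0))"
    by (rule sum.cong) auto
  also have "\<dots> = 2 * real K / (b - a) * x $ i" by simp
  finally have e: "(\<Sum>j\<in>UNIV. (if j = i then 2 * real K / (b - a) else 0) * x $ j) = 2 * real K / (b - a) * x $ i" .
  have "tau s i x = 2 * real K / (b-a) * x $ i - 2 * real K * a / (b-a) + 2 * real s / (real CARD('n) + 1)"
    unfolding tau_def uu_def by (simp add: diff_divide_distrib algebra_simps)
  then show ?thesis unfolding e by simp
qed

lemma first_layer: "g \<in> L1 \<Longrightarrow> \<exists>A bb. g = (\<lambda>x. euaf ((\<Sum>i\<in>UNIV. A i * x $ i) + bb))"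
proof -
  assume "g \<in> L1"
  then obtain s i where g: "g = n1v s i \<or> g = n1w s i \<or> g = n1t s i" unfolding L1_def by auto
  define A where "A j = (if j = i then 2 * real K / (b - a) else 0)" for j
  define B where "B = 2 * real s / (real CARD('n) + 1) - 2 * real K * a / (b - a)"
  have t: "tau s i x = (\<Sum>j\<in>UNIV. A j * x $ j) + B" for x unfolding A_def B_def by (rule tau_lin)
  have t2: "tau s i x / T0 = (\<Sum>j\<in>UNIV. (A j / T0) * x $ j) + B / T0" for x
    unfolding t by (simp add: add_divide_distrib sum_divide_distrib)
  show ?thesis
  proof (cases "g = n1v s i")
    case True then show ?thesis unfolding n1v_def using t by (intro exI[of _ A] exI[of _ B]) auto
  next
    case F1: False
    show ?thesis
    proof (cases "g = n1w s i")
      case True then show ?thesis unfolding n1w_def using t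
        by (intro exI[of _ A] exI[of _ "B + 1/2"]) (auto simp: add.assoc)
    next
      case False
      then have "g = n1t s i" using g F1 by auto
      then show ?thesis unfolding n1t_def using t2
        by (intro exI[of _ "\<lambda>j. A j / T0"] exI[of _ "B / T0"]) auto
    qed
  qed
qed

lemma network: "phi AA MM \<in> H_net (36 * CARD('n) * (2 * CARD('n) + 1)) 11"
proof (rule realize[where Ls = Ls])
  show "finite (Ls k) \<and> card (Ls k) \<le> 36 * CARD('n) * (2 * CARD('n) + 1)" if "k < 11" for k :: nat
  proof -
    have C1: "1 \<le> CARD('n)" by (simp add: Suc_leI)
    then have "1 * 1 \<le> CARD('n) * (2 * CARD('n) + 1)" by (intro mult_mono) auto
    then have N1: "1 \<le> 36 * CARD('n) * (2 * CARD('n) + 1)" by linarith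
    show ?thesis using fins cards N1 unfolding Ls_def by auto
  qed
  show "1 \<le> (11::nat)" by simp
  show "\<exists>A bb. g = (\<lambda>x. euaf ((\<Sum>i\<in>UNIV. A i * x $ i) + bb))" if "g \<in> Ls 0" for g
    using first_layer that unfolding Ls_def by simp
  show "lay (Ls k) (Ls (Suc k))" if "Suc k < 11" for k :: nat
  proof -
    have "k \<in> {0,1,2,3,4,5,6,7,8,9}" using that by auto
    then show ?thesis using lay1 lay2 lay3 lay4 lay5 lay6 lay7 lay8 unfolding Ls_def by auto
  qed
  have "(\<lambda>x. AA * (3 * n11 x - 1) - MM) \<in> aff {n11}"
    by (intro aff_intros aff_single)
  then show "phi AA MM \<in> aff (Ls (11 - 1))" unfolding Ls_def phi_def[abs_def] by simp
qed

end


context net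
begin

lemma vvb: "0 \<le> vv s i x" "vv s i x \<le> 1" "0 \<le> ww s i x" "ww s i x \<le> 1"
  unfolding vv_def ww_def using sigma1_nonneg sigma1_le1 by auto

lemma T0pos: "T0 > 0" unfolding T0_def by simp

lemma v1: assumes "x \<in> cube" "s \<le> CARD('n)"
  shows "n1v s i x = vv s i x" "n1w s i x = ww s i x" "n1t s i x = tau s i x / T0"
proof -
  have t: "0 \<le> tau s i x" "tau s i x < T0" using tau_bounds[OF assms] by auto
  show "n1v s i x = vv s i x" unfolding n1v_def vv_def using t by (simp add: euaf_pos)
  show "n1w s i x = ww s i x" unfolding n1w_def ww_def using t by (simp add: euaf_pos)
  show "n1t s i x = tau s i x / T0" unfolding n1t_def using t T0pos by (intro euaf_id) auto
qed

lemma v2: assumes "x \<in> cube" "s \<le> CARD('n)"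
  shows "n2v s i x = vv s i x" "n2t s i x = tau s i x / T0" "R1 s i x = max 0 (1/2 - ww s i x)"
    "beta s i x = betap s i x"
proof -
  note v = v1[OF assms, of i]
  have t: "0 \<le> tau s i x" "tau s i x < T0" using tau_bounds[OF assms] by auto
  show "n2v s i x = vv s i x" unfolding n2v_def v using vvb by (intro euaf_id) auto
  show "n2t s i x = tau s i x / T0" unfolding n2t_def v using t T0pos by (intro euaf_id) auto
  have "\<bar>1/2 - ww s i x\<bar> \<le> 1" using vvb[of s i x] by auto
  from relu_pair[OF this] show "R1 s i x = max 0 (1/2 - ww s i x)"
    unfolding R1_def n2a_def n2b_def v by simp
  have "\<bar>vv s i x - 1 + 2 * dl\<bar> \<le> 1" using vvb[of s i x] dl_facts(1,2) by auto
  from relu_pair[OF this] show "beta s i x = betap s i x"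
    unfolding beta_def n2c_def n2d_def betap_def v by simp
qed

lemma sum_betap: "0 \<le> (\<Sum>i\<in>UNIV. betap s i x)" "(\<Sum>i\<in>UNIV. betap s i x) \<le> 2 * real CARD('n)"
proof -
  show "0 \<le> (\<Sum>i\<in>UNIV. betap s i x)" using betap_nonneg by (intro sum_nonneg) auto
  have "(\<Sum>i\<in>UNIV. betap s i x) \<le> (\<Sum>i\<in>(UNIV::'n set). 2)" using betap_le2 by (intro sum_mono) auto
  then show "(\<Sum>i\<in>UNIV. betap s i x) \<le> 2 * real CARD('n)" by simp
qed

lemma v3: assumes "x \<in> cube" "s \<le> CARD('n)"
  shows "n3v s i x = vv s i x" "n3t s i x = tau s i x / T0" "FF s i x = Fp s i x" "rho s x = rhop s x"
proof -
  note v = v2[OF assms, of i]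
  have t: "0 \<le> tau s i x" "tau s i x < T0" using tau_bounds[OF assms] by auto
  show n3v: "n3v s i x = vv s i x" unfolding n3v_def v using vvb by (intro euaf_id) auto
  show n3t: "n3t s i x = tau s i x / T0" unfolding n3t_def v using t T0pos by (intro euaf_id) auto
  define M where "M = max 0 (1/2 - ww s i x)"
  have M: "0 \<le> M" "M \<le> 1/2" unfolding M_def using vvb[of s i x] by (auto simp: max_def)
  have zz: "z3 s i x = vv s i x / Cc - M" unfolding z3_def v M_def[symmetric]
    using dl_facts(5) by (simp add: field_simps)
  have vc: "0 \<le> vv s i x / Cc" "vv s i x / Cc \<le> 1" using vvb[of s i x] dl_facts(5)
    by (auto simp: field_simps)
  have "\<bar>z3 s i x\<bar> \<le> 1" unfolding zz using M vc by auto
  from relu_pair[OF this] have r: "(2 * n3a s i x - 1 + n3b s i x) / 2 = max 0 (z3 s i x)"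
    unfolding n3a_def n3b_def by simp
  have "Cc * max 0 (z3 s i x) = max 0 (vv s i x - Cc * M)"
  proof -
    have "z3 s i x = (vv s i x - Cc * M) / Cc" unfolding zz using dl_facts(5) by (simp add: field_simps)
    then show ?thesis using max_scale[of Cc "vv s i x - Cc * M"] dl_facts(5) by simp
  qed
  then show "FF s i x = Fp s i x" unfolding FF_def Fp_def r n3v n3t M_def
    using T0pos by (simp add: mult.assoc)
  have sb: "(\<Sum>i\<in>UNIV. beta s i x) = (\<Sum>i\<in>UNIV. betap s i x)"
    using v2(4)[OF assms] by simp
  have D: "2 * real CARD('n) + 1 > 0" by simp
  have "\<bar>zr s x\<bar> \<le> 1" unfolding zr_def sb using sum_betap[of s x] D
    by (auto simp: abs_le_iff field_simps)
  from relu_pair[OF this] have r2: "(2 * n3p s x - 1 + n3q s x) / 2 = max 0 (zr s x)"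
    unfolding n3p_def n3q_def by simp
  have "(2 * real CARD('n) + 1) * max 0 (zr s x) = max 0 (1 - (\<Sum>i\<in>UNIV. betap s i x))"
    unfolding zr_def sb using max_scale[OF D, of "1 - (\<Sum>i\<in>UNIV. betap s i x)"] by simp
  then show "rho s x = rhop s x" unfolding rho_def r2 rhop_def .
qed

lemma nn_cube: assumes "x \<in> cube" "s \<le> CARD('n)"
  shows "nn s x = (\<Sum>j<CARD('n). Fp s (ei j) x / 2 * real PP ^ j) + real s * real PP ^ CARD('n)"
  unfolding nn_def using v3(3)[OF assms] by simp

lemma nn_exact: assumes "x \<in> cube" "s \<le> CARD('n)" "rhop s x > 0"
  shows "nn s x = real (code s x)"
proof -
  have F: "Fp s i x = 2 * of_int (mI s i x)" for i
    using Fp_exact rhop_pos_exact[OF assms(3)] by blast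
  have "nn s x = (\<Sum>j<CARD('n). of_int (mI s (ei j) x) * real PP ^ j) + real s * real PP ^ CARD('n)"
    unfolding nn_cube[OF assms(1,2)] F by simp
  also have "\<dots> = (\<Sum>j<CARD('n). real (nat (mI s (ei j) x)) * real PP ^ j) + real s * real PP ^ CARD('n)"
    using mI_bounds(1)[OF assms(1,2)] by simp
  also have "\<dots> = real (code s x)" unfolding code_def by simp
  finally show ?thesis .
qed

lemma nn_lower: assumes "x \<in> cube" "s \<le> CARD('n)"
  shows "nn s x \<ge> - real (CARD('n) * PP ^ CARD('n))"
proof -
  have P1: "real PP \<ge> 1" unfolding PP_def by simp
  have tm: "Fp s (ei j) x / 2 * real PP ^ j \<ge> - (real PP ^ CARD('n))" if "j < CARD('n)" for j
  proof -
    have "real PP ^ j \<le> real PP ^ CARD('n)" using P1 that by (intro power_increasing) auto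
    moreover have "Fp s (ei j) x / 2 \<ge> -1" using Fp_lower[OF assms, of "ei j"] by simp
    moreover have "real PP ^ j \<ge> 0" by simp
    ultimately have "Fp s (ei j) x / 2 * real PP ^ j \<ge> -1 * real PP ^ j"
      by (intro mult_right_mono) auto
    then show ?thesis using \<open>real PP ^ j \<le> real PP ^ CARD('n)\<close> by simp
  qed
  have "(\<Sum>j<CARD('n). Fp s (ei j) x / 2 * real PP ^ j) \<ge> (\<Sum>j<CARD('n). - (real PP ^ CARD('n)))"
    using tm by (intro sum_mono) auto
  moreover have "real s * real PP ^ CARD('n) \<ge> 0" by simp
  ultimately show ?thesis unfolding nn_cube[OF assms] by (simp add: add_increasing2)
qed

lemma nnc: assumes "x \<in> cube" "s \<le> CARD('n)" shows "nn s x + c > 1"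
  using nn_lower[OF assms] c_big unfolding PP_def by simp

lemma v4: assumes "x \<in> cube" "s \<le> CARD('n)"
  shows "n4h s x = 1 / (nn s x + c) - 1" "n4r s x = rhop s x"
proof -
  have p: "nn s x + c > 1" by (rule nnc[OF assms])
  then have "1 - nn s x - c < 0" by simp
  then have "n4h s x = (1 - nn s x - c) / (1 - (1 - nn s x - c))" unfolding n4h_def by (simp add: euaf_neg)
  also have "\<dots> = 1 / (nn s x + c) - 1" using p by (simp add: field_simps)
  finally show "n4h s x = 1 / (nn s x + c) - 1" .
  show "n4r s x = rhop s x" unfolding n4r_def v3(4)[OF assms] using rhop_bounds by (intro euaf_id) auto
qed

lemma v5: assumes "x \<in> cube" "s \<le> CARD('n)"
  shows "n5g s x = sigma1 (2 * t / (nn s x + c))" "n5r s x = rhop s x"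
proof -
  have p: "nn s x + c > 1" by (rule nnc[OF assms])
  have "\<bar>2 * t / (nn s x + c)\<bar> \<le> 2 * \<bar>t\<bar>"
  proof -
    have "\<bar>2 * t / (nn s x + c)\<bar> = 2 * \<bar>t\<bar> / (nn s x + c)" using p by (simp add: abs_mult abs_div)
    also have "\<dots> \<le> 2 * \<bar>t\<bar> / 1" using p by (intro divide_left_mono) auto
    finally show ?thesis by simp
  qed
  then have nn0: "0 \<le> 2 * t / (nn s x + c) + off" using off_ge by linarith
  have "n5g s x = euaf (2 * t / (nn s x + c) + off)" unfolding n5g_def v4(1)[OF assms] by simp
  also have "\<dots> = sigma1 (2 * t / (nn s x + c) + 2 * of_int koff)" using nn0 off_eq by (simp add: euaf_pos)
  also have "\<dots> = sigma1 (2 * t / (nn s x + c))" by (rule sigma1_periodic)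
  finally show "n5g s x = sigma1 (2 * t / (nn s x + c))" .
  show "n5r s x = rhop s x" unfolding n5r_def v4(2)[OF assms] using rhop_bounds by (intro euaf_id) auto
qed

lemma pr6_eq: "pr6 s x = Pr hh (n5r s x) (n5g s x)"
  unfolding pr6_def Pr_def Sq_def n6a_def n6b_def n6c_def n6d_def by simp

lemma psi_eq: "psi x = (real CARD('n) + 1) * Pr hh (av x) (RR x)"
  unfolding psi_def Pr_def Sq_def n7a_def n7b_def n7c_def n7d_def by simp

definition "Xv x = (\<Sum>s\<le>CARD('n). rhop s x * sigma1 (2 * t / (nn s x + c))) / (\<Sum>s\<le>CARD('n). rhop s x)"

lemma psi_close: assumes x: "x \<in> cube"
  shows "\<bar>psi x - Xv x\<bar> \<le> 28 * (real CARD('n) + 1) * hh^2" "0 \<le> Xv x" "Xv x \<le> 1"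
proof -
  define D where "D = real CARD('n) + 1"
  have D1: "D \<ge> 1" unfolding D_def by simp
  define G where "G s = sigma1 (2 * t / (nn s x + c))" for s
  define Z where "Z = (\<Sum>s\<le>CARD('n). rhop s x)"
  define P where "P = (\<Sum>s\<le>CARD('n). rhop s x * G s)"
  have Gb: "0 \<le> G s" "G s \<le> 1" for s unfolding G_def using sigma1_nonneg sigma1_le1 by auto
  have Z1: "Z \<ge> 1" unfolding Z_def by (rule sum_rhop_ge1)
  have ZD: "Z \<le> D"
  proof -
    have "Z \<le> (\<Sum>s\<le>CARD('n). (1::real))" unfolding Z_def using rhop_bounds by (intro sum_mono) auto
    then show ?thesis unfolding D_def by simp
  qed
  have P0: "0 \<le> P" unfolding P_def using rhop_bounds Gb by (intro sum_nonneg) auto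
  have PZ: "P \<le> Z" unfolding P_def Z_def
    using rhop_bounds Gb by (intro sum_mono) (simp add: mult_left_le)
  have Xv_eq: "Xv x = P / Z" unfolding Xv_def P_def Z_def G_def ..
  show "0 \<le> Xv x" unfolding Xv_eq using P0 Z1 by simp
  show "Xv x \<le> 1" unfolding Xv_eq using PZ Z1 by simp
  have h14: "14 * hh^2 \<le> 1/2"
  proof -
    have "hh^2 \<le> (1/6)^2" using h_pos h_le by (intro power_mono) auto
    then show ?thesis by (simp add: power2_eq_square)
  qed
  have pr: "\<bar>pr6 s x - rhop s x * G s\<bar> \<le> 14 * hh^2" if "s \<le> CARD('n)" for s
  proof -
    have e: "pr6 s x = Pr hh (rhop s x) (G s)" unfolding pr6_eq v5[OF x that] G_def ..
    show ?thesis unfolding e using rhop_bounds[of s x] Gb[of s] h_pos h_le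
      by (intro Pr_err) auto
  qed
  have E1: "\<bar>(\<Sum>s\<le>CARD('n). pr6 s x) - P\<bar> \<le> D * (14 * hh^2)"
  proof -
    have "\<bar>(\<Sum>s\<le>CARD('n). pr6 s x) - P\<bar> = \<bar>\<Sum>s\<le>CARD('n). (pr6 s x - rhop s x * G s)\<bar>"
      unfolding P_def by (simp add: sum_subtractf)
    also have "\<dots> \<le> (\<Sum>s\<le>CARD('n). \<bar>pr6 s x - rhop s x * G s\<bar>)" by (rule sum_abs)
    also have "\<dots> \<le> (\<Sum>s\<le>CARD('n). 14 * hh^2)" using pr by (intro sum_mono) auto
    also have "\<dots> = D * (14 * hh^2)" unfolding D_def by simp
    finally show ?thesis .
  qed
  have av_eq: "av x = (\<Sum>s\<le>CARD('n). pr6 s x) / D" unfolding av_def D_def ..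
  have RR_eq: "RR x = 1 / Z"
  proof -
    have "(\<Sum>s\<le>CARD('n). n5r s x) = Z" unfolding Z_def using v5(2)[OF x] by simp
    then show ?thesis unfolding RR_def n6z_def using euaf_recip[OF Z1] by simp
  qed
  have RRb: "0 < RR x" "RR x \<le> 1" unfolding RR_eq using Z1 by auto
  have avb: "\<bar>av x - P / D\<bar> \<le> 14 * hh^2"
  proof -
    have "av x - P / D = ((\<Sum>s\<le>CARD('n). pr6 s x) - P) / D" unfolding av_eq by (simp add: diff_divide_distrib)
    then have "\<bar>av x - P / D\<bar> = \<bar>(\<Sum>s\<le>CARD('n). pr6 s x) - P\<bar> / D" using D1 by (simp add: abs_div)
    also have "\<dots> \<le> D * (14 * hh^2) / D" using E1 D1 by (intro divide_right_mono) auto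
    finally show ?thesis using D1 by simp
  qed
  have PD: "0 \<le> P / D" "P / D \<le> 1" using P0 PZ ZD D1 by (auto simp: field_simps)
  have pr7: "\<bar>Pr hh (av x) (RR x) - av x * RR x\<bar> \<le> 14 * hh^2"
    using h_pos h_le avb PD RRb h14 by (intro Pr_err) (auto simp: abs_le_iff)
  have "psi x - Xv x = D * (Pr hh (av x) (RR x) - av x * RR x) + ((\<Sum>s\<le>CARD('n). pr6 s x) - P) * RR x"
    unfolding psi_eq Xv_eq D_def[symmetric] RR_eq av_eq using D1 Z1 by (simp add: field_simps)
  moreover have "\<bar>D * (Pr hh (av x) (RR x) - av x * RR x)\<bar> \<le> D * (14 * hh^2)"
    using pr7 D1 by (simp add: abs_mult)
  moreover have "\<bar>((\<Sum>s\<le>CARD('n). pr6 s x) - P) * RR x\<bar> \<le> D * (14 * hh^2)"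
  proof -
    have "\<bar>((\<Sum>s\<le>CARD('n). pr6 s x) - P) * RR x\<bar> = \<bar>(\<Sum>s\<le>CARD('n). pr6 s x) - P\<bar> * RR x"
      using RRb by (simp add: abs_mult)
    also have "\<dots> \<le> \<bar>(\<Sum>s\<le>CARD('n). pr6 s x) - P\<bar> * 1" using RRb by (intro mult_left_mono) auto
    finally show ?thesis using E1 by simp
  qed
  ultimately have "\<bar>psi x - Xv x\<bar> \<le> D * (14 * hh^2) + D * (14 * hh^2)" by linarith
  moreover have "D * (14 * hh^2) + D * (14 * hh^2) = 28 * (real CARD('n) + 1) * hh^2"
    unfolding D_def by (simp add: algebra_simps)
  ultimately show "\<bar>psi x - Xv x\<bar> \<le> 28 * (real CARD('n) + 1) * hh^2" by linarith
qed

lemma phi_val: assumes x: "x \<in> cube"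
  shows "phi AA MM x = AA * psi x - MM"
proof -
  have "\<bar>psi x - Xv x\<bar> \<le> 1" using psi_close(1)[OF x] h_small by simp
  then have p: "-1 \<le> psi x" "psi x \<le> 2" using psi_close(2,3)[OF x] by auto
  have e8: "n8 x = (psi x + 1) / 3" unfolding n8_def using p by (intro euaf_id) auto
  have e9: "n9 x = (psi x + 1) / 3" unfolding n9_def e8 using p by (intro euaf_id) auto
  have e10: "n10 x = (psi x + 1) / 3" unfolding n10_def e9 using p by (intro euaf_id) auto
  have e11: "n11 x = (psi x + 1) / 3" unfolding n11_def e10 using p by (intro euaf_id) auto
  show ?thesis unfolding phi_def e11 by (simp add: field_simps)
qed

end


context net
begin

lemma Xv_close:
  assumes Yb: "\<And>n. 0 \<le> Y n \<and> Y n \<le> 1"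
    and kr: "\<And>n. n < PP ^ Suc CARD('n) \<Longrightarrow> \<bar>t * (1 / (real n + c)) - of_int (hK n) - Y n / 2\<bar> < e1"
    and close: "\<And>s. s \<le> CARD('n) \<Longrightarrow> rhop s x > 0 \<Longrightarrow> \<bar>Y (code s x) - Fx\<bar> \<le> e2"
    and x: "x \<in> cube"
  shows "\<bar>Xv x - Fx\<bar> \<le> 2 * e1 + e2"
proof -
  define G where "G s = sigma1 (2 * t / (nn s x + c))" for s
  define Z where "Z = (\<Sum>s\<le>CARD('n). rhop s x)"
  have Z1: "Z \<ge> 1" unfolding Z_def by (rule sum_rhop_ge1)
  have Gc: "\<bar>G s - Fx\<bar> \<le> 2 * e1 + e2" if s: "s \<le> CARD('n)" "rhop s x > 0" for s
  proof -
    define n where "n = code s x"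
    have nb: "n < PP ^ Suc CARD('n)" unfolding n_def by (rule code_bound[OF x s(1)])
    have nn: "nn s x = real n" unfolding n_def by (rule nn_exact[OF x s])
    have "G s = sigma1 (2 * (t * (1 / (real n + c))))" unfolding G_def nn by simp
    also have "\<dots> = sigma1 ((2 * (t * (1 / (real n + c))) - 2 * of_int (hK n)) + 2 * of_int (hK n))" by simp
    also have "\<dots> = sigma1 (2 * (t * (1 / (real n + c))) - 2 * of_int (hK n))" by (rule sigma1_periodic)
    finally have g: "G s = sigma1 (2 * (t * (1 / (real n + c))) - 2 * of_int (hK n))" .
    have y: "sigma1 (2 * (Y n / 2)) = Y n" using Yb[of n] by (simp add: sigma1_abs)
    have "\<bar>G s - Y n\<bar> \<le> \<bar>(2 * (t * (1 / (real n + c))) - 2 * of_int (hK n)) - 2 * (Y n / 2)\<bar>"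
      unfolding g using sigma1_lip[of "2 * (t * (1 / (real n + c))) - 2 * of_int (hK n)" "2 * (Y n / 2)"] y
      by simp
    also have "\<dots> = \<bar>2 * (t * (1 / (real n + c)) - of_int (hK n) - Y n / 2)\<bar>"
      by (rule arg_cong[where f=abs]) (simp add: algebra_simps)
    also have "\<dots> = 2 * \<bar>t * (1 / (real n + c)) - of_int (hK n) - Y n / 2\<bar>" by (subst abs_mult) simp
    also have "\<dots> \<le> 2 * e1" using kr[OF nb] by simp
    finally have "\<bar>G s - Y n\<bar> \<le> 2 * e1" .
    moreover have "\<bar>Y n - Fx\<bar> \<le> e2" unfolding n_def by (rule close[OF s])
    ultimately show ?thesis by linarith
  qed
  have e1: "(\<Sum>s\<le>CARD('n). rhop s x * (G s - Fx)) = (\<Sum>s\<le>CARD('n). rhop s x * G s) - Fx * Z"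
  proof -
    have "(\<Sum>s\<le>CARD('n). rhop s x * (G s - Fx)) = (\<Sum>s\<le>CARD('n). rhop s x * G s - Fx * rhop s x)"
      by (rule sum.cong) (auto simp: algebra_simps)
    also have "\<dots> = (\<Sum>s\<le>CARD('n). rhop s x * G s) - (\<Sum>s\<le>CARD('n). Fx * rhop s x)"
      by (rule sum_subtractf)
    also have "(\<Sum>s\<le>CARD('n). Fx * rhop s x) = Fx * Z" unfolding Z_def by (rule sum_distrib_left[symmetric])
    finally show ?thesis .
  qed
  have "Xv x - Fx = (\<Sum>s\<le>CARD('n). rhop s x * (G s - Fx)) / Z"
    unfolding e1 Xv_def G_def[symmetric] Z_def[symmetric] using Z1
    by (simp add: field_simps)
  moreover have "\<bar>\<Sum>s\<le>CARD('n). rhop s x * (G s - Fx)\<bar> \<le> (2 * e1 + e2) * Z"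
  proof -
    have "\<bar>\<Sum>s\<le>CARD('n). rhop s x * (G s - Fx)\<bar> \<le> (\<Sum>s\<le>CARD('n). \<bar>rhop s x * (G s - Fx)\<bar>)"
      by (rule sum_abs)
    also have "\<dots> \<le> (\<Sum>s\<le>CARD('n). rhop s x * (2 * e1 + e2))"
    proof (rule sum_mono)
      fix s assume s: "s \<in> {..CARD('n)}"
      show "\<bar>rhop s x * (G s - Fx)\<bar> \<le> rhop s x * (2 * e1 + e2)"
      proof (cases "rhop s x > 0")
        case True
        then show ?thesis using Gc[of s] s by (simp add: abs_mult mult_left_mono)
      next
        case False
        then have "rhop s x = 0" using rhop_bounds[of s x] by simp
        then show ?thesis by simp
      qed
    qed
    also have "\<dots> = (2 * e1 + e2) * Z" unfolding Z_def sum_distrib_left by (rule sum.cong) simp_all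
    finally show ?thesis .
  qed
  ultimately show ?thesis using Z1 by (simp add: abs_div pos_divide_le_eq)
qed

end

theorem theorem1:
  fixes f :: "real^'n::finite \<Rightarrow> real" and a b \<epsilon> :: real
  assumes "a < b"
    and "continuous_on {x. \<forall>i. x $ i \<in> {a..b}} f"
    and "\<epsilon> > 0"
  shows "\<exists>\<phi> \<in> (H_net (36 * CARD('n) * (2 * CARD('n) + 1)) 11 :: (real^'n \<Rightarrow> real) set).
           \<forall>x. (\<forall>i. x $ i \<in> {a..b}) \<longrightarrow> \<bar>\<phi> x - f x\<bar> < \<epsilon>"
proof -
  note ab = assms(1) and ep = assms(3)
  define S where "S = {x::real^'n. \<forall>i. x $ i \<in> {a..b}}"
  have fc: "continuous_on S f" using assms(2) unfolding S_def .
  have S_box: "S = cbox (\<chi> i. a) (\<chi> i. b)" unfolding S_def by (auto simp: mem_box_cart)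
  have cS: "compact S" unfolding S_box by (rule compact_cbox)
  have "bounded (f ` S)" using compact_continuous_image[OF fc cS] compact_imp_bounded by blast
  then obtain B where B: "\<forall>y\<in>f ` S. norm y \<le> B" unfolding bounded_iff by blast
  define Mf where "Mf = max 0 B"
  have Mf: "\<And>x. x \<in> S \<Longrightarrow> \<bar>f x\<bar> \<le> Mf" "Mf \<ge> 0" using B unfolding Mf_def by force+
  define AA where "AA = 2 * Mf + 1"
  have AA: "AA \<ge> 1" unfolding AA_def using Mf(2) by simp
  define fh where "fh x = (f x + Mf) / AA" for x
  have fhb: "0 \<le> fh x \<and> fh x \<le> 1" if "x \<in> S" for x
    using Mf(1)[OF that] AA unfolding fh_def AA_def by (auto simp: field_simps abs_le_iff)
  define \<eta> where "\<eta> = min (\<epsilon> / AA) (1/2)"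
  have eta: "\<eta> > 0" "\<eta> \<le> 1/2" "AA * \<eta> \<le> \<epsilon>"
  proof -
    show "\<eta> > 0" unfolding \<eta>_def using ep AA by simp
    show "\<eta> \<le> 1/2" unfolding \<eta>_def by (rule min.cobounded2)
    have "AA * \<eta> \<le> AA * (\<epsilon> / AA)" unfolding \<eta>_def using AA by (intro mult_left_mono) auto
    then show "AA * \<eta> \<le> \<epsilon>" using AA by simp
  qed
  have uc: "uniformly_continuous_on S f" by (rule compact_uniformly_continuous[OF fc cS])
  have "AA * \<eta> / 4 > 0" using eta AA by simp
  from uc[unfolded uniformly_continuous_on_def, rule_format, OF this]
  obtain \<delta> where del: "\<delta> > 0" "\<And>x x'. x \<in> S \<Longrightarrow> x' \<in> S \<Longrightarrow> dist x' x < \<delta> \<Longrightarrow> dist (f x') (f x) < AA * \<eta> / 4"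
    by blast
  define d where "d = CARD('n)"
  define K where "K = max (max d 1) (nat \<lceil>real d * (b - a) / \<delta>\<rceil> + 1)"
  have K: "K \<ge> d" "K \<ge> 1" "real d * (b - a) / real K < \<delta>"
  proof -
    show "K \<ge> d" "K \<ge> 1" unfolding K_def by auto
    have "real d * (b - a) / \<delta> < real K"
    proof -
      have "real d * (b - a) / \<delta> \<le> real (nat \<lceil>real d * (b - a) / \<delta>\<rceil>)" by linarith
      also have "\<dots> < real K" unfolding K_def by simp
      finally show ?thesis .
    qed
    then have "real d * (b - a) < real K * \<delta>" using del(1) by (simp add: field_simps)
    moreover have "real K > 0" using \<open>K \<ge> 1\<close> by simp
    ultimately show "real d * (b - a) / real K < \<delta>" by (simp add: field_simps)
  qed
  obtain ei where ei: "bij_betw ei {..<CARD('n)} (UNIV :: 'n set)"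
    using ex_bij_betw_nat_finite[of "UNIV :: 'n set"] by (auto simp: atLeast0LessThan)
  interpret G: geo a b K ei
    by unfold_locales (use ab K ei in \<open>auto simp: d_def\<close>)
  have cube_S: "G.cube = S" unfolding G.cube_def S_def ..
  define M where "M = (K + 2) ^ Suc d"
  have PPM: "G.PP ^ Suc CARD('n) = M" unfolding M_def G.PP_def d_def ..
  obtain c where c: "c > 1 + real (d * (K + 2) ^ d)"
    and cnz: "\<forall>q::nat\<Rightarrow>int. (\<exists>n<M. q n \<noteq> 0) \<longrightarrow> (\<Sum>n<M. of_int (q n) / (c + of_nat n)) \<noteq> 0"
    using exists_c[of "1 + real (d * (K + 2) ^ d)" M] by auto
  have cpos: "c > 0" using c by (smt (verit) of_nat_0_le_iff)
  note ind = indep_theta[OF cpos cnz]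
  define Y where "Y n = (if \<exists>x s. x \<in> S \<and> s \<le> d \<and> G.rhop s x > 0 \<and> G.code s x = n
     then fh (SOME x. \<exists>s. x \<in> S \<and> s \<le> d \<and> G.rhop s x > 0 \<and> G.code s x = n) else 0)" for n
  have Yb: "0 \<le> Y n \<and> Y n \<le> 1" for n
  proof (cases "\<exists>x s. x \<in> S \<and> s \<le> d \<and> G.rhop s x > 0 \<and> G.code s x = n")
    case True
    then have "\<exists>x. \<exists>s. x \<in> S \<and> s \<le> d \<and> G.rhop s x > 0 \<and> G.code s x = n" by blast
    from someI_ex[OF this] have "(SOME x. \<exists>s. x \<in> S \<and> s \<le> d \<and> G.rhop s x > 0 \<and> G.code s x = n) \<in> S"
      by blast
    moreover have "Y n = fh (SOME x. \<exists>s. x \<in> S \<and> s \<le> d \<and> G.rhop s x > 0 \<and> G.code s x = n)"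
      unfolding Y_def using True by (rule if_P)
    ultimately show ?thesis using fhb by simp
  next
    case False
    have "Y n = 0" unfolding Y_def using False by (rule if_not_P)
    then show ?thesis by simp
  qed
  have e8: "\<eta> / 8 > 0" using eta by simp
  obtain tt hK where kr: "\<And>n. n < M \<Longrightarrow> \<bar>tt * (1 / (of_nat n + c)) - of_int (hK n) - Y n / 2\<bar> < \<eta> / 8"
    using Kronecker_thm_1[OF ind(1) ind(2) e8, of "\<lambda>n. Y n / 2"] by blast
  define koff where "koff = \<lceil>\<bar>tt\<bar>\<rceil>"
  define off where "off = 2 * (of_int koff :: real)"
  have off_ge: "off \<ge> 2 * \<bar>tt\<bar>" unfolding off_def koff_def by linarith
  define hh where "hh = min (1/6) (\<eta> / (112 * (real d + 1)))"
  have hh: "0 < hh" "hh \<le> 1/6" "28 * (real d + 1) * hh^2 \<le> \<eta> / 4"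
  proof -
    show "0 < hh" unfolding hh_def using eta by simp
    show "hh \<le> 1/6" unfolding hh_def by (rule min.cobounded1)
    have "hh^2 \<le> hh * 1" unfolding power2_eq_square using \<open>0 < hh\<close> \<open>hh \<le> 1/6\<close>
      by (intro mult_left_mono) auto
    also have "\<dots> \<le> \<eta> / (112 * (real d + 1))" unfolding hh_def by (simp only: mult_1_right min.cobounded2)
    finally have "hh^2 \<le> \<eta> / (112 * (real d + 1))" .
    then have "28 * (real d + 1) * hh^2 \<le> 28 * (real d + 1) * (\<eta> / (112 * (real d + 1)))"
      by (intro mult_left_mono) auto
    also have "\<dots> = \<eta> / 4" by (simp add: field_simps)
    finally show "28 * (real d + 1) * hh^2 \<le> \<eta> / 4" .
  qed
  interpret N: net a b K ei c tt off hh koff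
  proof unfold_locales
    show "1 + real (CARD('n) * (K + 2) ^ CARD('n)) < c" using c unfolding d_def .
    show "off = 2 * of_int koff" unfolding off_def ..
    show "2 * \<bar>tt\<bar> \<le> off" by (rule off_ge)
    show "0 < hh" "hh \<le> 1/6" using hh by auto
    show "28 * (real CARD('n) + 1) * hh^2 \<le> 1" using hh(3) eta(2) unfolding d_def by simp
  qed
  show ?thesis
  proof (rule bexI[of _ "N.phi AA Mf"])
    show "N.phi AA Mf \<in> H_net (36 * CARD('n) * (2 * CARD('n) + 1)) 11" by (rule N.network)
    show "\<forall>x. (\<forall>i. x $ i \<in> {a..b}) \<longrightarrow> \<bar>N.phi AA Mf x - f x\<bar> < \<epsilon>"
    proof (intro allI impI)
      fix x :: "real^'n" assume "\<forall>i. x $ i \<in> {a..b}"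
      then have xS: "x \<in> S" unfolding S_def by simp
      then have xc: "x \<in> G.cube" unfolding cube_S .
      have close: "\<bar>Y (G.code s x) - fh x\<bar> \<le> \<eta> / 4" if s: "s \<le> CARD('n)" "G.rhop s x > 0" for s
      proof -
        define n where "n = G.code s x"
        have ex: "\<exists>x'. \<exists>s'. x' \<in> S \<and> s' \<le> d \<and> G.rhop s' x' > 0 \<and> G.code s' x' = n"
          using xS s unfolding n_def d_def by blast
        define x' where "x' = (SOME x'. \<exists>s'. x' \<in> S \<and> s' \<le> d \<and> G.rhop s' x' > 0 \<and> G.code s' x' = n)"
        obtain s' where s': "x' \<in> S" "s' \<le> d" "G.rhop s' x' > 0" "G.code s' x' = n"
          using someI_ex[OF ex] unfolding x'_def by blast
        have Yn: "Y n = fh x'" unfolding Y_def x'_def using ex by (rule if_P)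
        have ci: "\<bar>x $ i - x' $ i\<bar> \<le> (b - a) / real K" for i
          using G.code_close[of x x' s s' i] xc s'(1) s(1) s'(2) s'(4) unfolding cube_S n_def d_def by auto
        have "dist x' x \<le> (\<Sum>i\<in>UNIV. \<bar>(x' - x) $ i\<bar>)" unfolding dist_norm by (rule norm_le_l1_cart)
        also have "\<dots> \<le> (\<Sum>i\<in>(UNIV::'n set). (b - a) / real K)"
          using ci by (intro sum_mono) (simp add: abs_minus_commute)
        also have "\<dots> = real d * (b - a) / real K" unfolding d_def by simp
        also have "\<dots> < \<delta>" by (rule K(3))
        finally have "dist (f x') (f x) < AA * \<eta> / 4" using del(2)[OF xS s'(1)] by simp
        then have "\<bar>f x' - f x\<bar> < AA * \<eta> / 4" unfolding dist_real_def .
        then have "\<bar>fh x' - fh x\<bar> < \<eta> / 4"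
          unfolding fh_def using AA by (simp add: diff_divide_distrib[symmetric] abs_div field_simps)
        then show ?thesis unfolding n_def[symmetric] Yn by simp
      qed
      have kr': "\<bar>tt * (1 / (real n + c)) - of_int (hK n) - Y n / 2\<bar> < \<eta> / 8"
        if "n < G.PP ^ Suc CARD('n)" for n using kr[of n] that unfolding PPM by simp
      have X: "\<bar>N.Xv x - fh x\<bar> \<le> 2 * (\<eta> / 8) + \<eta> / 4"
        by (rule N.Xv_close[of Y hK "\<eta> / 8" x "fh x" "\<eta> / 4"]) (use Yb kr' close xc in auto)
      have P: "\<bar>N.psi x - N.Xv x\<bar> \<le> \<eta> / 4" using N.psi_close(1)[OF xc] hh(3) unfolding d_def by simp
      have "\<bar>N.psi x - fh x\<bar> < \<eta>" using X P eta(1) by linarith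
      then have "AA * \<bar>N.psi x - fh x\<bar> < AA * \<eta>" using AA by simp
      moreover have "N.phi AA Mf x - f x = AA * (N.psi x - fh x)"
        unfolding N.phi_val[OF xc] fh_def using AA by (simp add: field_simps)
      ultimately have "\<bar>N.phi AA Mf x - f x\<bar> < AA * \<eta>" using AA by (simp add: abs_mult)
      then show "\<bar>N.phi AA Mf x - f x\<bar> < \<epsilon>" using eta(3) by linarith
    qed
  qed
qed


end
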